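(* Let $R$ be a finitely generated standard algebra. Assume that for every sufficiently large integer $d$, the set of all finitely generated homogeneous right ideals $I$ of $R$ with $m(I)\le d$ forms a rate filtration. Then $R$ is projective (right) coherent.
   Context: $R$ standard: graded, $R_0=k$, generated by $R_1$, $R_+=\bigoplus_{i>0}R_i$. $R$ is projective coherent if the kernel of every homogeneous homomorphism between finitely generated graded free right $R$-modules is finitely generated. For a homogeneous right ideal $J$, $m(J)$ is the maximal degree of a minimal homogeneous generator. A rate filtration is a set $\mathbf F$ of finitely generated homogeneous right ideals with $0,R_+\in\mathbf F$ such that for every $0\ne I\in\mathbf F$ there exist $J\in\mathbf F$, $J\ne I$, and a homogeneous $x\in I$ with $I=J+xR$, $m(J)\le m(I)$, and $\{a\in R: xa\in J\}\in\mathbf F$. *)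

theory Defs
  imports Main
begin

text \<open>A graded ring is a type 'r :: ring_1 together with a family G :: nat => 'r set
of homogeneous components G i = R_i.\<close>

definition add_closure :: "'r::ring_1 set \<Rightarrow> 'r set" where
  "add_closure S = {sum_list xs | xs. set xs \<subseteq> S}"

definition is_grading :: "(nat \<Rightarrow> 'r::ring_1 set) \<Rightarrow> bool" where
  "is_grading G \<longleftrightarrow>
     (\<forall>i. 0 \<in> G i \<and> (\<forall>x\<in>G i. \<forall>y\<in>G i. x + y \<in> G i) \<and> (\<forall>x\<in>G i. - x \<in> G i)) \<and>
     (\<forall>i j. \<forall>x\<in>G i. \<forall>y\<in>G j. x * y \<in> G (i + j)) \<and>
     1 \<in> G 0 \<and>
     (\<forall>x. \<exists>!c. (\<forall>i. c i \<in> G i) \<and> finite {i. c i \<noteq> 0} \<and> x = (\<Sum>i\<in>{i. c i \<noteq> 0}. c i))"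

definition comp :: "(nat \<Rightarrow> 'r::ring_1 set) \<Rightarrow> nat \<Rightarrow> 'r \<Rightarrow> 'r" where
  "comp G d x = (THE c. (\<forall>i. c i \<in> G i) \<and> finite {i. c i \<noteq> 0} \<and> x = (\<Sum>i\<in>{i. c i \<noteq> 0}. c i)) d"

text \<open>Standard algebra: graded, R_0 = k a field (central, so R is a k-algebra),
generated by R_1.  Finitely generated: R_1 is finite dimensional over R_0.\<close>
definition standard_algebra :: "(nat \<Rightarrow> 'r::ring_1 set) \<Rightarrow> bool" where
  "standard_algebra G \<longleftrightarrow> is_grading G \<and>
     (\<forall>a\<in>G 0. \<forall>x. a * x = x * a) \<and>
     (\<forall>a\<in>G 0. a \<noteq> 0 \<longrightarrow> (\<exists>b\<in>G 0. a * b = 1)) \<and>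
     (\<forall>n. G (Suc n) = add_closure {a * b | a b. a \<in> G n \<and> b \<in> G 1})"

definition fg_standard_algebra :: "(nat \<Rightarrow> 'r::ring_1 set) \<Rightarrow> bool" where
  "fg_standard_algebra G \<longleftrightarrow> standard_algebra G \<and>
     (\<exists>S. finite S \<and> S \<subseteq> G 1 \<and>
        G 1 = {sum_list (map (\<lambda>(c, s). c * s) ps) | ps. set ps \<subseteq> G 0 \<times> S})"

definition homogeneous :: "(nat \<Rightarrow> 'r::ring_1 set) \<Rightarrow> 'r \<Rightarrow> bool" where
  "homogeneous G x \<longleftrightarrow> (\<exists>d. x \<in> G d)"

definition hdeg :: "(nat \<Rightarrow> 'r::ring_1 set) \<Rightarrow> 'r \<Rightarrow> nat" where
  "hdeg G x = (LEAST d. x \<in> G d)"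

definition rideal_gen :: "'r::ring_1 set \<Rightarrow> 'r set" where
  "rideal_gen X = {sum_list (map (\<lambda>(x, r). x * r) ps) | ps. set ps \<subseteq> X \<times> UNIV}"

definition right_ideal :: "'r::ring_1 set \<Rightarrow> bool" where
  "right_ideal I \<longleftrightarrow> 0 \<in> I \<and> (\<forall>x\<in>I. \<forall>y\<in>I. x + y \<in> I) \<and> (\<forall>x\<in>I. - x \<in> I) \<and>
     (\<forall>x\<in>I. \<forall>r. x * r \<in> I)"

definition hom_right_ideal :: "(nat \<Rightarrow> 'r::ring_1 set) \<Rightarrow> 'r set \<Rightarrow> bool" where
  "hom_right_ideal G I \<longleftrightarrow> right_ideal I \<and> (\<forall>x\<in>I. \<forall>d. comp G d x \<in> I)"

definition fg_hom_right_ideal :: "(nat \<Rightarrow> 'r::ring_1 set) \<Rightarrow> 'r set \<Rightarrow> bool" where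
  "fg_hom_right_ideal G I \<longleftrightarrow> hom_right_ideal G I \<and> (\<exists>X. finite X \<and> I = rideal_gen X)"

definition min_hom_gens :: "(nat \<Rightarrow> 'r::ring_1 set) \<Rightarrow> 'r set \<Rightarrow> 'r set \<Rightarrow> bool" where
  "min_hom_gens G I X \<longleftrightarrow> finite X \<and> (\<forall>x\<in>X. homogeneous G x) \<and> rideal_gen X = I \<and>
     (\<forall>Y. Y \<subset> X \<longrightarrow> rideal_gen Y \<noteq> I)"

text \<open>m(J): maximal degree of a minimal homogeneous generator (0 for the zero ideal).\<close>
definition mdeg :: "(nat \<Rightarrow> 'r::ring_1 set) \<Rightarrow> 'r set \<Rightarrow> nat" where
  "mdeg G J = Max (insert 0 (hdeg G ` (SOME X. min_hom_gens G J X)))"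

definition Rplus :: "(nat \<Rightarrow> 'r::ring_1 set) \<Rightarrow> 'r set" where
  "Rplus G = {x. comp G 0 x = 0}"

definition rate_filtration :: "(nat \<Rightarrow> 'r::ring_1 set) \<Rightarrow> 'r set set \<Rightarrow> bool" where
  "rate_filtration G F \<longleftrightarrow>
     (\<forall>I\<in>F. fg_hom_right_ideal G I) \<and> {0} \<in> F \<and> Rplus G \<in> F \<and>
     (\<forall>I\<in>F. I \<noteq> {0} \<longrightarrow>
        (\<exists>J\<in>F. \<exists>x. J \<noteq> I \<and> homogeneous G x \<and> x \<in> I \<and>
           I = {j + x * r | j r. j \<in> J} \<and> mdeg G J \<le> mdeg G I \<and>
           {a. x * a \<in> J} \<in> F))"

definition Gz :: "(nat \<Rightarrow> 'r::ring_1 set) \<Rightarrow> int \<Rightarrow> 'r set" where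
  "Gz G k = (if k < 0 then {0} else G (nat k))"

text \<open>A finitely generated graded free right module is
R(-a_0) + ... + R(-a_{n-1}), realised as vectors (nat => 'r, zero outside {..<n}).
A homogeneous homomorphism of degree e into R(-b_0)+...+R(-b_{m-1}) is (right R-linear, hence)
left multiplication by an m x n matrix M with M j i of degree a i - b j + e.\<close>
definition projective_coherent :: "(nat \<Rightarrow> 'r::ring_1 set) \<Rightarrow> bool" where
  "projective_coherent G \<longleftrightarrow>
     (\<forall>(n::nat) (m::nat) (a::nat \<Rightarrow> int) (b::nat \<Rightarrow> int) (e::int) (M::nat \<Rightarrow> nat \<Rightarrow> 'r).
        (\<forall>j<m. \<forall>i<n. M j i \<in> Gz G (a i - b j + e)) \<longrightarrow>
        (let K = {v::nat \<Rightarrow> 'r. (\<forall>i\<ge>n. v i = 0) \<and> (\<forall>j<m. (\<Sum>i<n. M j i * v i) = 0)} in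
         \<exists>ws::(nat \<Rightarrow> 'r) list. set ws \<subseteq> K \<and>
           K = {(\<lambda>i. \<Sum>k<length ws. (ws ! k) i * r k) | r. True}))"

end

theory Submission
  imports Defs
begin

locale grad =
  fixes G :: "nat \<Rightarrow> 'r::ring_1 set"
  assumes gr: "is_grading G"
begin

lemma G0: "0 \<in> G i" using gr unfolding is_grading_def by blast
lemma Gadd: "x \<in> G i \<Longrightarrow> y \<in> G i \<Longrightarrow> x + y \<in> G i" using gr unfolding is_grading_def by blast
lemma Gneg: "x \<in> G i \<Longrightarrow> - x \<in> G i" using gr unfolding is_grading_def by blast
lemma Gmult: "x \<in> G i \<Longrightarrow> y \<in> G j \<Longrightarrow> x * y \<in> G (i + j)" using gr unfolding is_grading_def by blast
lemma G1: "1 \<in> G 0" using gr unfolding is_grading_def by blast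
lemma Gdiff: "x \<in> G i \<Longrightarrow> y \<in> G i \<Longrightarrow> x - y \<in> G i"
  using Gadd Gneg by (metis diff_conv_add_uminus)
lemma Gsum: "(\<And>a. a \<in> A \<Longrightarrow> f a \<in> G i) \<Longrightarrow> sum f A \<in> G i"
  by (induction A rule: infinite_finite_induct) (auto simp: G0 Gadd)

definition P :: "'r \<Rightarrow> (nat \<Rightarrow> 'r) \<Rightarrow> bool" where
  "P x c \<longleftrightarrow> (\<forall>i. c i \<in> G i) \<and> finite {i. c i \<noteq> 0} \<and> x = (\<Sum>i\<in>{i. c i \<noteq> 0}. c i)"

lemma ex1P: "\<exists>!c. P x c" using gr unfolding is_grading_def P_def by blast

lemma comp_eq: "comp G d x = (THE c. P x c) d"
  unfolding comp_def P_def by simp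

lemma P_comp: "P x (\<lambda>d. comp G d x)"
proof -
  have "P x (THE c. P x c)" using theI'[of "P x", OF ex1P] .
  moreover have "(\<lambda>d. comp G d x) = (THE c. P x c)" by (rule ext) (simp add: comp_eq)
  ultimately show ?thesis by simp
qed

lemma comp_in: "comp G d x \<in> G d" using P_comp unfolding P_def by blast

lemma comp_fin: "finite {d. comp G d x \<noteq> 0}" using P_comp unfolding P_def by blast

lemma comp_unique:
  assumes "\<And>i. c i \<in> G i" "finite A" "{i. c i \<noteq> 0} \<subseteq> A" "x = (\<Sum>i\<in>A. c i)"
  shows "comp G d x = c d"
proof -
  have fin: "finite {i. c i \<noteq> 0}" using assms(2,3) finite_subset by blast
  have "(\<Sum>i\<in>A. c i) = (\<Sum>i\<in>{i. c i \<noteq> 0}. c i)"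
    by (rule sum.mono_neutral_right) (use assms in auto)
  hence Pc: "P x c" unfolding P_def using assms fin by auto
  have "(THE c. P x c) = c" by (rule the1_equality[of "P x", OF ex1P Pc])
  thus ?thesis by (simp add: comp_eq)
qed

lemma comp_sum_bound:
  assumes "finite A" "{d. comp G d x \<noteq> 0} \<subseteq> A"
  shows "x = (\<Sum>d\<in>A. comp G d x)"
proof -
  have "x = (\<Sum>i\<in>{d. comp G d x \<noteq> 0}. comp G i x)" using P_comp unfolding P_def by blast
  also have "\<dots> = (\<Sum>d\<in>A. comp G d x)"
    by (rule sum.mono_neutral_left) (use assms in auto)
  finally show ?thesis .
qed

lemma comp_hom: "x \<in> G e \<Longrightarrow> comp G d x = (if d = e then x else 0)"
  by (rule comp_unique[where A="{e}"]) (auto simp: G0)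

lemma comp_add: "comp G d (x + y) = comp G d x + comp G d y"
proof -
  let ?A = "{d. comp G d x \<noteq> 0} \<union> {d. comp G d y \<noteq> 0}"
  have fA: "finite ?A" using comp_fin by auto
  show ?thesis
  proof (rule comp_unique[where A="?A"])
    show "\<And>i. comp G i x + comp G i y \<in> G i" using comp_in Gadd by blast
    show "{i. comp G i x + comp G i y \<noteq> 0} \<subseteq> ?A" by auto
    show "x + y = (\<Sum>i\<in>?A. comp G i x + comp G i y)"
      using comp_sum_bound[OF fA, of x] comp_sum_bound[OF fA, of y]
      by (simp add: sum.distrib)
  qed (use fA in auto)
qed

lemma comp_zero: "comp G d 0 = 0"
  using comp_add[of d 0 0] by simp

lemma comp_neg: "comp G d (- x) = - comp G d x"
  using comp_add[of d x "- x"] comp_zero by (metis add.commute neg_eq_iff_add_eq_0)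

lemma comp_diff: "comp G d (x - y) = comp G d x - comp G d y"
  using comp_add comp_neg by (metis diff_conv_add_uminus)

lemma comp_sum: "comp G d (sum f A) = (\<Sum>a\<in>A. comp G d (f a))"
  by (induction A rule: infinite_finite_induct) (auto simp: comp_zero comp_add)

lemma comp_mult_right:
  assumes y: "y \<in> G e"
  shows "comp G d (x * y) = (if e \<le> d then comp G (d - e) x * y else 0)"
proof -
  let ?S = "{i. comp G i x \<noteq> 0}"
  let ?c = "\<lambda>j. if e \<le> j then comp G (j - e) x * y else 0"
  have fS: "finite ?S" by (rule comp_fin)
  have "comp G d (x * y) = ?c d"
  proof (rule comp_unique[where A="(\<lambda>i. i + e) ` ?S"])
    show "\<And>i. ?c i \<in> G i"
    proof -
      fix i show "?c i \<in> G i"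
        using Gmult[OF comp_in y, of "i - e" x] G0[of i] by (cases "e \<le> i") auto
    qed
    show "finite ((\<lambda>i. i + e) ` ?S)" using fS by simp
    show "{i. ?c i \<noteq> 0} \<subseteq> (\<lambda>i. i + e) ` ?S"
    proof
      fix j assume "j \<in> {i. ?c i \<noteq> 0}"
      hence "e \<le> j" "comp G (j - e) x \<noteq> 0" by (auto split: if_splits)
      thus "j \<in> (\<lambda>i. i + e) ` ?S" by (intro image_eqI[of _ _ "j - e"]) auto
    qed
    have "x * y = (\<Sum>i\<in>?S. comp G i x) * y" using comp_sum_bound[OF fS, of x] by simp
    also have "\<dots> = (\<Sum>i\<in>?S. comp G i x * y)" by (simp add: sum_distrib_right)
    also have "\<dots> = (\<Sum>i\<in>?S. ?c (i + e))" by simp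
    also have "\<dots> = (\<Sum>j\<in>(\<lambda>i. i + e) ` ?S. ?c j)"
      by (subst sum.reindex) (auto simp: inj_on_def)
    finally show "x * y = (\<Sum>j\<in>(\<lambda>i. i + e) ` ?S. ?c j)" .
  qed
  thus ?thesis by simp
qed

lemma comp_mult_left:
  assumes y: "y \<in> G e"
  shows "comp G d (y * x) = (if e \<le> d then y * comp G (d - e) x else 0)"
proof -
  let ?S = "{i. comp G i x \<noteq> 0}"
  let ?c = "\<lambda>j. if e \<le> j then y * comp G (j - e) x else 0"
  have fS: "finite ?S" by (rule comp_fin)
  have "comp G d (y * x) = ?c d"
  proof (rule comp_unique[where A="(\<lambda>i. i + e) ` ?S"])
    show "\<And>i. ?c i \<in> G i"
    proof -
      fix i show "?c i \<in> G i"
        using Gmult[OF y comp_in, of "i - e" x] G0[of i] by (cases "e \<le> i") auto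
    qed
    show "finite ((\<lambda>i. i + e) ` ?S)" using fS by simp
    show "{i. ?c i \<noteq> 0} \<subseteq> (\<lambda>i. i + e) ` ?S"
    proof
      fix j assume "j \<in> {i. ?c i \<noteq> 0}"
      hence "e \<le> j" "comp G (j - e) x \<noteq> 0" by (auto split: if_splits)
      thus "j \<in> (\<lambda>i. i + e) ` ?S" by (intro image_eqI[of _ _ "j - e"]) auto
    qed
    have "y * x = y * (\<Sum>i\<in>?S. comp G i x)" using comp_sum_bound[OF fS, of x] by simp
    also have "\<dots> = (\<Sum>i\<in>?S. y * comp G i x)" by (simp add: sum_distrib_left)
    also have "\<dots> = (\<Sum>i\<in>?S. ?c (i + e))" by simp
    also have "\<dots> = (\<Sum>j\<in>(\<lambda>i. i + e) ` ?S. ?c j)"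
      by (subst sum.reindex) (auto simp: inj_on_def)
    finally show "y * x = (\<Sum>j\<in>(\<lambda>i. i + e) ` ?S. ?c j)" .
  qed
  thus ?thesis by simp
qed

lemma Gz0: "0 \<in> Gz G k" by (simp add: Gz_def G0)
lemma Gzadd: "x \<in> Gz G k \<Longrightarrow> y \<in> Gz G k \<Longrightarrow> x + y \<in> Gz G k"
  by (auto simp: Gz_def Gadd split: if_splits)
lemma Gzneg: "x \<in> Gz G k \<Longrightarrow> - x \<in> Gz G k"
  by (auto simp: Gz_def Gneg split: if_splits)
lemma Gzdiff: "x \<in> Gz G k \<Longrightarrow> y \<in> Gz G k \<Longrightarrow> x - y \<in> Gz G k"
  by (auto simp: Gz_def Gdiff split: if_splits)
lemma Gzsum: "(\<And>a. a \<in> A \<Longrightarrow> f a \<in> Gz G k) \<Longrightarrow> sum f A \<in> Gz G k"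
  by (induction A rule: infinite_finite_induct) (auto simp: Gz0 Gzadd)
lemma Gzmult: "x \<in> Gz G p \<Longrightarrow> y \<in> Gz G q \<Longrightarrow> x * y \<in> Gz G (p + q)"
proof -
  assume x: "x \<in> Gz G p" and y: "y \<in> Gz G q"
  show ?thesis
  proof (cases "p < 0 \<or> q < 0")
    case True
    hence "x = 0 \<or> y = 0" using x y by (auto simp: Gz_def)
    thus ?thesis using Gz0 by auto
  next
    case False
    hence "x \<in> G (nat p)" "y \<in> G (nat q)" using x y by (auto simp: Gz_def)
    hence "x * y \<in> G (nat p + nat q)" by (rule Gmult)
    moreover have "nat p + nat q = nat (p + q)" using False by (simp add: nat_add_distrib)
    ultimately show ?thesis using False by (simp add: Gz_def)
  qed
qed
lemma Gz1: "1 \<in> Gz G 0" by (simp add: Gz_def G1)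
lemma Gz_nat: "Gz G (int n) = G n" by (simp add: Gz_def)

definition compz :: "int \<Rightarrow> 'r \<Rightarrow> 'r" where
  "compz k x = (if k < 0 then 0 else comp G (nat k) x)"

lemma compz_in: "compz k x \<in> Gz G k"
  by (simp add: compz_def Gz_def comp_in)
lemma compz_add: "compz k (x + y) = compz k x + compz k y"
  by (simp add: compz_def comp_add)
lemma compz_sum: "compz k (sum f A) = (\<Sum>a\<in>A. compz k (f a))"
  by (simp add: compz_def comp_sum)
lemma compz_neg: "compz k (- x) = - compz k x"
  by (simp add: compz_def comp_neg)
lemma compz_hom: "x \<in> Gz G k \<Longrightarrow> compz k x = x"
  by (auto simp: compz_def Gz_def comp_hom)
lemma compz_mult_left:
  assumes g: "g \<in> Gz G c"
  shows "compz k (g * a) = g * compz (k - c) a"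
proof (cases "c < 0")
  case True thus ?thesis using g by (simp add: Gz_def compz_def comp_zero)
next
  case False
  hence g': "g \<in> G (nat c)" using g by (simp add: Gz_def)
  show ?thesis
    using False comp_mult_left[OF g', of "nat k" a]
    by (auto simp: compz_def nat_diff_distrib)
qed

lemma homogenize:
  assumes y: "y \<in> Gz G \<gamma>" and g: "\<And>i. i < t \<Longrightarrow> g i \<in> Gz G (c i)"
    and ya: "y = (\<Sum>i<t. g i * a i)"
  shows "y = (\<Sum>i<t. g i * compz (\<gamma> - c i) (a i))"
proof -
  have "y = compz \<gamma> y" using compz_hom[OF y] by simp
  also have "\<dots> = (\<Sum>i<t. compz \<gamma> (g i * a i))" unfolding ya by (rule compz_sum)
  also have "\<dots> = (\<Sum>i<t. g i * compz (\<gamma> - c i) (a i))"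
    by (rule sum.cong) (auto simp: compz_mult_left g)
  finally show ?thesis .
qed

end

lemma sum_list_map_append_pairs: "sum_list (map f (xs @ ys)) = sum_list (map f xs) + sum_list (map f ys)"
  by simp

lemma rideal_gen_right_ideal: "right_ideal (rideal_gen X)"
proof -
  let ?f = "\<lambda>(x::'a, r). x * r"
  have zero: "0 \<in> rideal_gen X" unfolding rideal_gen_def by (rule CollectI, rule exI[of _ "[]"]) simp
  have add: "a + b \<in> rideal_gen X" if "a \<in> rideal_gen X" "b \<in> rideal_gen X" for a b
  proof -
    note th = that
    obtain ps where "a = sum_list (map ?f ps)" "set ps \<subseteq> X \<times> UNIV"
      using th unfolding rideal_gen_def by blast
    moreover obtain qs where "b = sum_list (map ?f qs)" "set qs \<subseteq> X \<times> UNIV"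
      using th unfolding rideal_gen_def by blast
    ultimately show ?thesis unfolding rideal_gen_def by (intro CollectI exI[of _ "ps @ qs"]) auto
  qed
  have mul: "sum_list (map ?f ps) * s = sum_list (map ?f (map (\<lambda>(x, r). (x, r * s)) ps))" for ps :: "('a \<times> 'a) list" and s
    by (induction ps) (auto simp: distrib_right mult.assoc)
  have mulc: "a * s \<in> rideal_gen X" if "a \<in> rideal_gen X" for a s
  proof -
    note th = that
    obtain ps where ps: "a = sum_list (map ?f ps)" "set ps \<subseteq> X \<times> UNIV"
      using th unfolding rideal_gen_def by blast
    have "set (map (\<lambda>(x, r). (x, r * s)) ps) \<subseteq> X \<times> UNIV" using ps(2) by auto
    thus ?thesis unfolding rideal_gen_def using mul[of ps s] ps(1) by blast
  qed
  have neg: "- a \<in> rideal_gen X" if "a \<in> rideal_gen X" for a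
    using mulc[OF that, of "-1"] by simp
  show ?thesis unfolding right_ideal_def using zero add mulc neg by blast
qed

lemma right_ideal_sum: "right_ideal I \<Longrightarrow> (\<And>a. a \<in> A \<Longrightarrow> f a \<in> I) \<Longrightarrow> sum f A \<in> I"
  unfolding right_ideal_def by (induction A rule: infinite_finite_induct) auto

lemma right_ideal_diff: "right_ideal I \<Longrightarrow> x \<in> I \<Longrightarrow> y \<in> I \<Longrightarrow> x - y \<in> I"
  unfolding right_ideal_def by (metis diff_conv_add_uminus)

lemma rideal_gen_base: "x \<in> X \<Longrightarrow> x \<in> rideal_gen X"
  unfolding rideal_gen_def by (intro CollectI exI[of _ "[(x, 1)]"]) auto

lemma rideal_gen_min: assumes "right_ideal I" "X \<subseteq> I" shows "rideal_gen X \<subseteq> I"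
proof
  fix y assume "y \<in> rideal_gen X"
  then obtain ps where ps: "y = sum_list (map (\<lambda>(x, r). x * r) ps)" "set ps \<subseteq> X \<times> UNIV"
    unfolding rideal_gen_def by blast
  have "set ps \<subseteq> X \<times> UNIV \<Longrightarrow> sum_list (map (\<lambda>(x, r). x * r) ps) \<in> I"
    by (induction ps) (use assms in \<open>auto simp: right_ideal_def\<close>)
  thus "y \<in> I" using ps by simp
qed

lemma rideal_gen_idx:
  "y \<in> rideal_gen (g ` {..<(t::nat)}) \<longleftrightarrow> (\<exists>a. y = (\<Sum>i<t. g i * a i))"
proof
  assume "y \<in> rideal_gen (g ` {..<t})"
  then obtain ps where ps: "y = sum_list (map (\<lambda>(x, r). x * r) ps)" "set ps \<subseteq> g ` {..<t} \<times> UNIV"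
    unfolding rideal_gen_def by blast
  have "set ps \<subseteq> g ` {..<t} \<times> UNIV \<Longrightarrow> \<exists>a. sum_list (map (\<lambda>(x, r). x * r) ps) = (\<Sum>i<t. g i * a i)"
  proof (induction ps)
    case Nil thus ?case by (intro exI[of _ "\<lambda>_. 0"]) simp
  next
    case (Cons p ps)
    obtain x r where p: "p = (x, r)" by (cases p)
    obtain j where j: "j < t" "x = g j" using Cons.prems p by auto
    obtain a where a: "sum_list (map (\<lambda>(x, r). x * r) ps) = (\<Sum>i<t. g i * a i)"
      using Cons by auto
    let ?a = "a(j := a j + r)"
    have "(\<Sum>i<t. g i * ?a i) = (\<Sum>i<t. g i * a i + (if i = j then g i * r else 0))"
      by (rule sum.cong) (auto simp: distrib_left)
    also have "\<dots> = (\<Sum>i<t. g i * a i) + (\<Sum>i<t. (if i = j then g i * r else 0))"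
      by (rule sum.distrib)
    also have "(\<Sum>i<t. (if i = j then g i * r else 0)) = g j * r" using j(1) by (subst sum.delta) auto
    finally show ?case using a p j by (intro exI[of _ ?a]) (simp add: add.commute)
  qed
  thus "\<exists>a. y = (\<Sum>i<t. g i * a i)" using ps by simp
next
  assume "\<exists>a. y = (\<Sum>i<t. g i * a i)"
  then obtain a where a: "y = (\<Sum>i<t. g i * a i)" by blast
  have R: "right_ideal (rideal_gen (g ` {..<t}))" by (rule rideal_gen_right_ideal)
  show "y \<in> rideal_gen (g ` {..<t})" unfolding a
  proof (rule right_ideal_sum[OF R])
    fix i assume "i \<in> {..<t}"
    hence "g i \<in> rideal_gen (g ` {..<t})" by (intro rideal_gen_base) auto
    thus "g i * a i \<in> rideal_gen (g ` {..<t})" using R unfolding right_ideal_def by blast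
  qed
qed



definition lc :: "(nat \<Rightarrow> 'r::ring_1) list \<Rightarrow> (nat \<Rightarrow> 'r) \<Rightarrow> nat \<Rightarrow> 'r" where
  "lc ws r = (\<lambda>i. \<Sum>k<length ws. (ws ! k) i * r k)"

definition rspan :: "(nat \<Rightarrow> 'r::ring_1) list \<Rightarrow> (nat \<Rightarrow> 'r) set" where
  "rspan ws = {lc ws r | r. True}"

definition submod :: "(nat \<Rightarrow> 'r::ring_1) set \<Rightarrow> bool" where
  "submod S \<longleftrightarrow> (\<lambda>_. 0) \<in> S \<and> (\<forall>v\<in>S. \<forall>w\<in>S. (\<lambda>i. v i + w i) \<in> S) \<and> (\<forall>v\<in>S. \<forall>a. (\<lambda>i. v i * a) \<in> S)"

lemma submod_sum: assumes "submod S" "\<And>k. k \<in> A \<Longrightarrow> v k \<in> S"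
  shows "(\<lambda>i. \<Sum>k\<in>A. v k i) \<in> S"
  using assms(2)
proof (induction A rule: infinite_finite_induct)
  case (infinite A) thus ?case using assms(1) by (simp add: submod_def)
next
  case empty thus ?case using assms(1) by (simp add: submod_def)
next
  case (insert x F)
  hence "(\<lambda>i. v x i + (\<Sum>k\<in>F. v k i)) \<in> S" using assms(1) unfolding submod_def by auto
  thus ?case using insert by simp
qed

lemma submod_lincomb: assumes "submod S" "\<And>k. k \<in> A \<Longrightarrow> v k \<in> S"
  shows "(\<lambda>i. \<Sum>k\<in>A. v k i * a k) \<in> S"
proof -
  have "(\<lambda>i. v k i * a k) \<in> S" if "k \<in> A" for k using assms that unfolding submod_def by blast
  from submod_sum[OF assms(1), of A "\<lambda>k i. v k i * a k", OF this] show ?thesis by simp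
qed

lemma submod_rspan: "submod (rspan ws)"
proof -
  have z: "(\<lambda>_. 0) \<in> rspan ws" unfolding rspan_def lc_def by (intro CollectI exI[of _ "\<lambda>_. 0"]) auto
  have a: "(\<lambda>i. v i + w i) \<in> rspan ws" if "v \<in> rspan ws" "w \<in> rspan ws" for v w
  proof -
    note th = that
    obtain r where "v = lc ws r" using th unfolding rspan_def by blast
    moreover obtain s where "w = lc ws s" using th unfolding rspan_def by blast
    ultimately show ?thesis unfolding rspan_def lc_def
      by (intro CollectI exI[of _ "\<lambda>k. r k + s k"]) (auto simp: distrib_left sum.distrib)
  qed
  have m: "(\<lambda>i. v i * c) \<in> rspan ws" if "v \<in> rspan ws" for v c
  proof -
    note th = that
    obtain r where "v = lc ws r" using th unfolding rspan_def by blast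
    thus ?thesis unfolding rspan_def lc_def
      by (intro CollectI exI[of _ "\<lambda>k. r k * c"]) (auto simp: sum_distrib_right mult.assoc)
  qed
  show ?thesis unfolding submod_def using z a m by blast
qed

lemma rspan_base: "w \<in> set ws \<Longrightarrow> w \<in> rspan ws"
proof -
  assume "w \<in> set ws"
  then obtain j where j: "j < length ws" "ws ! j = w" by (auto simp: in_set_conv_nth)
  have "lc ws (\<lambda>k. if k = j then 1 else 0) = w"
    unfolding lc_def using j by (auto simp: if_distrib cong: if_cong)
  thus ?thesis unfolding rspan_def by blast
qed

lemma rspan_min: assumes "submod S" "set ws \<subseteq> S" shows "rspan ws \<subseteq> S"
proof
  fix v assume "v \<in> rspan ws"
  then obtain r where r: "v = lc ws r" unfolding rspan_def by blast
  have "(\<lambda>i. \<Sum>k\<in>{..<length ws}. (ws ! k) i * r k) \<in> S"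
    by (rule submod_lincomb[OF assms(1)]) (use assms(2) in auto)
  thus "v \<in> S" using r unfolding lc_def by simp
qed

lemma rspan_lincomb: "(\<And>k. k \<in> A \<Longrightarrow> v k \<in> rspan ws) \<Longrightarrow> (\<lambda>i. \<Sum>k\<in>A. v k i * a k) \<in> rspan ws"
  by (rule submod_lincomb[OF submod_rspan])

definition fgen :: "(nat \<Rightarrow> 'r::ring_1) set \<Rightarrow> (nat \<Rightarrow> 'r) list \<Rightarrow> bool" where
  "fgen K ws \<longleftrightarrow> set ws \<subseteq> K \<and> K = rspan ws"

lemma fgenI: assumes "submod K" "set ws \<subseteq> K" "\<And>v. v \<in> K \<Longrightarrow> v \<in> rspan ws"
  shows "fgen K ws"
  unfolding fgen_def using rspan_min[OF assms(1,2)] assms(2,3) by blast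

definition Syz :: "nat \<Rightarrow> (nat \<Rightarrow> 'r::ring_1) \<Rightarrow> (nat \<Rightarrow> 'r) set" where
  "Syz t h = {r. (\<forall>i\<ge>t. r i = 0) \<and> (\<Sum>i<t. h i * r i) = 0}"

lemma submod_Syz: "submod (Syz t h)"
proof -
  have "(\<Sum>i<t. h i * (v i * a)) = (\<Sum>i<t. h i * v i) * a" for v a
    by (simp add: sum_distrib_right mult.assoc)
  thus ?thesis unfolding submod_def Syz_def
    by (auto simp: distrib_left sum.distrib)
qed


lemma lc_lc: "lc ws (lc us s) = lc (map (lc ws) us) s"
proof
  fix i
  have "lc ws (lc us s) i = (\<Sum>k<length ws. (ws ! k) i * (\<Sum>p<length us. (us ! p) k * s p))"
    by (simp add: lc_def)
  also have "\<dots> = (\<Sum>k<length ws. \<Sum>p<length us. (ws ! k) i * ((us ! p) k * s p))"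
    by (simp add: sum_distrib_left)
  also have "\<dots> = (\<Sum>p<length us. \<Sum>k<length ws. (ws ! k) i * (us ! p) k * s p)"
    by (subst sum.swap) (simp add: mult.assoc)
  also have "\<dots> = (\<Sum>p<length us. (\<Sum>k<length ws. (ws ! k) i * (us ! p) k) * s p)"
    by (simp add: sum_distrib_right)
  also have "\<dots> = lc (map (lc ws) us) s i"
    by (simp add: lc_def)
  finally show "lc ws (lc us s) i = lc (map (lc ws) us) s i" .
qed

lemma lc_in_rspan: "lc ws r \<in> rspan ws" unfolding rspan_def by blast

lemma rspan_mono: "set ws \<subseteq> set ws' \<Longrightarrow> rspan ws \<subseteq> rspan ws'"
  by (rule rspan_min[OF submod_rspan]) (use rspan_base in blast)

lemma hsum: "(\<Sum>k<t. h k * lc cols v k) = (\<Sum>i<length cols. (\<Sum>k<t. h k * (cols ! i) k) * v i)"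
proof -
  have "(\<Sum>k<t. h k * lc cols v k) = (\<Sum>k<t. \<Sum>i<length cols. h k * (cols ! i) k * v i)"
    by (simp add: lc_def sum_distrib_left mult.assoc)
  also have "\<dots> = (\<Sum>i<length cols. \<Sum>k<t. h k * (cols ! i) k * v i)" by (rule sum.swap)
  also have "\<dots> = (\<Sum>i<length cols. (\<Sum>k<t. h k * (cols ! i) k) * v i)"
    by (simp add: sum_distrib_right)
  finally show ?thesis .
qed

definition unitv :: "nat \<Rightarrow> nat \<Rightarrow> 'r::ring_1" where
  "unitv k = (\<lambda>j. if j = k then 1 else 0)"

lemma lc_unit: assumes "\<forall>i\<ge>t. r i = 0" shows "lc (map unitv [0..<t]) r = r"
proof
  fix i
  have "lc (map unitv [0..<t]) r i = (\<Sum>k<t. (if i = k then 1 else 0) * r k)"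
    by (simp add: lc_def unitv_def)
  also have "\<dots> = (\<Sum>k<t. if k = i then r k else 0)" by (rule sum.cong) auto
  also have "\<dots> = r i" using assms by (subst sum.delta) auto
  finally show "lc (map unitv [0..<t]) r i = r i" .
qed

context grad
begin

definition hvec :: "(nat \<Rightarrow> int) \<Rightarrow> (nat \<Rightarrow> 'r) \<Rightarrow> bool" where
  "hvec c w \<longleftrightarrow> (\<exists>\<delta>. \<forall>i. w i \<in> Gz G (\<delta> - c i))"

definition hgen :: "(nat \<Rightarrow> 'r) set \<Rightarrow> (nat \<Rightarrow> int) \<Rightarrow> (nat \<Rightarrow> 'r) list \<Rightarrow> bool" where
  "hgen K c ws \<longleftrightarrow> fgen K ws \<and> (\<forall>w\<in>set ws. hvec c w)"

lemma hvec_lc: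
  assumes "\<And>i k. i < length cols \<Longrightarrow> (cols ! i) k \<in> Gz G (e i - c k)"
    and "\<And>i. i < length cols \<Longrightarrow> v i \<in> Gz G (\<delta> - e i)"
  shows "lc cols v k \<in> Gz G (\<delta> - c k)"
  unfolding lc_def
proof (rule Gzsum)
  fix i assume "i \<in> {..<length cols}"
  hence "(cols ! i) k * v i \<in> Gz G ((e i - c k) + (\<delta> - e i))"
    using assms by (intro Gzmult) auto
  thus "(cols ! i) k * v i \<in> Gz G (\<delta> - c k)" by simp
qed

lemma syz_zero:
  assumes "\<And>i. i < t \<Longrightarrow> h i = 0"
  shows "\<exists>ws. hgen (Syz t h) c ws"
proof -
  let ?ws = "map unitv [0..<t] :: (nat \<Rightarrow> 'r) list"
  have "hgen (Syz t h) c ?ws"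
    unfolding hgen_def
  proof (intro conjI ballI)
    show "fgen (Syz t h) ?ws"
    proof (rule fgenI[OF submod_Syz])
      show "set ?ws \<subseteq> Syz t h"
      proof
        fix w assume "w \<in> set ?ws"
        then obtain k where k: "k < t" "w = unitv k" by auto
        have "(\<Sum>i<t. h i * w i) = 0" by (rule sum.neutral) (simp add: assms)
        moreover have "\<forall>i\<ge>t. w i = 0" using k by (simp add: unitv_def)
        ultimately show "w \<in> Syz t h" by (simp add: Syz_def)
      qed
      fix v assume "v \<in> Syz t h"
      hence "lc ?ws v = v" by (intro lc_unit) (auto simp: Syz_def)
      thus "v \<in> rspan ?ws" using lc_in_rspan by metis
    qed
    fix w assume "w \<in> set ?ws"
    then obtain k where w: "w = unitv k" by auto
    have "unitv k i \<in> Gz G (c k - c i)" for i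
      by (cases "i = k") (simp_all add: unitv_def Gz0 Gz1)
    thus "hvec c w" unfolding hvec_def w by blast
  qed
  thus ?thesis by blast
qed

lemma homog_coeffs:
  fixes h h' :: "nat \<Rightarrow> 'r" and t t' :: nat
  assumes "\<And>k. k < t \<Longrightarrow> h k \<in> Gz G (c k)" "\<And>i. i < t' \<Longrightarrow> h' i \<in> Gz G (c' i)"
    and "\<And>k. k < t \<Longrightarrow> h k \<in> rideal_gen (h' ` {..<t'})"
  shows "\<exists>A. \<forall>k<t. h k = (\<Sum>i<t'. h' i * A i k) \<and> (\<forall>i. A i k \<in> Gz G (c k - c' i))"
proof -
  have "\<forall>k. \<exists>a. k < t \<longrightarrow> h k = (\<Sum>i<t'. h' i * a i)"
  proof
    fix k show "\<exists>a. k < t \<longrightarrow> h k = (\<Sum>i<t'. h' i * a i)"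
    proof (cases "k < t")
      case True
      thus ?thesis using assms(3)[OF True, unfolded rideal_gen_idx] by blast
    qed simp
  qed
  from choice[OF this] obtain a where a0: "\<forall>k. k < t \<longrightarrow> h k = (\<Sum>i<t'. h' i * a k i)" by blast
  have a: "\<And>k. k < t \<Longrightarrow> h k = (\<Sum>i<t'. h' i * a k i)" using a0 by blast
  let ?A = "\<lambda>i k. compz (c k - c' i) (a k i)"
  have "\<forall>k<t. h k = (\<Sum>i<t'. h' i * ?A i k) \<and> (\<forall>i. ?A i k \<in> Gz G (c k - c' i))"
  proof (intro allI impI conjI)
    fix k i assume k: "k < t"
    show "h k = (\<Sum>i<t'. h' i * ?A i k)" by (rule homogenize[OF assms(1)[OF k] assms(2) a[OF k]])
    show "?A i k \<in> Gz G (c k - c' i)" by (rule compz_in)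
  qed
  thus ?thesis by (rule exI[where x="?A"])
qed

lemma change_gens:
  fixes h h' :: "nat \<Rightarrow> 'r" and t t' :: nat
  assumes hh: "\<And>k. k < t \<Longrightarrow> h k \<in> Gz G (c k)" and hh': "\<And>i. i < t' \<Longrightarrow> h' i \<in> Gz G (c' i)"
    and eq: "rideal_gen (h ` {..<t}) = rideal_gen (h' ` {..<t'})"
    and ws: "hgen (Syz t' h') c' ws"
  shows "\<exists>ws'. hgen (Syz t h) c ws'"
proof -
  have rA: "h k \<in> rideal_gen (h' ` {..<t'})" if "k < t" for k
    using rideal_gen_base[of "h k" "h ` {..<t}"] that unfolding eq by blast
  have "\<exists>A. \<forall>k<t. h k = (\<Sum>i<t'. h' i * A i k) \<and> (\<forall>i. A i k \<in> Gz G (c k - c' i))"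
    by (rule homog_coeffs[where h=h and h'=h' and t=t and t'=t' and c=c and c'=c']) (auto intro: hh hh' rA)
  then obtain A where
    A0: "\<forall>k<t. h k = (\<Sum>i<t'. h' i * A i k) \<and> (\<forall>i. A i k \<in> Gz G (c k - c' i))" by blast
  have A: "\<And>k. k < t \<Longrightarrow> h k = (\<Sum>i<t'. h' i * A i k)" "\<And>i k. k < t \<Longrightarrow> A i k \<in> Gz G (c k - c' i)"
    using A0 by blast+
  have rB: "h' i \<in> rideal_gen (h ` {..<t})" if "i < t'" for i
    using rideal_gen_base[of "h' i" "h' ` {..<t'}"] that unfolding eq by blast
  have "\<exists>B. \<forall>i<t'. h' i = (\<Sum>k<t. h k * B k i) \<and> (\<forall>k. B k i \<in> Gz G (c' i - c k))"
    by (rule homog_coeffs[where h=h' and h'=h and t=t' and t'=t and c=c' and c'=c]) (auto intro: hh hh' rB)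
  then obtain B where
    B0: "\<forall>i<t'. h' i = (\<Sum>k<t. h k * B k i) \<and> (\<forall>k. B k i \<in> Gz G (c' i - c k))" by blast
  have B: "\<And>i. i < t' \<Longrightarrow> h' i = (\<Sum>k<t. h k * B k i)" "\<And>i k. i < t' \<Longrightarrow> B k i \<in> Gz G (c' i - c k)"
    using B0 by blast+
  define Acols where "Acols = map (\<lambda>k i. if i < t' then A i k else 0) [0..<t]"
  define Bcols where "Bcols = map (\<lambda>i k. if k < t then B k i else 0) [0..<t']"
  define S where "S = map (\<lambda>k j. unitv k j - lc Bcols (Acols ! k) j) [0..<t]"
  define ws' where "ws' = map (lc Bcols) ws @ S"
  have lA: "length Acols = t" and lB: "length Bcols = t'" and lS: "length S = t"
    by (auto simp: Acols_def Bcols_def S_def)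
  have Bdeg: "(Bcols ! i) k \<in> Gz G (c' i - c k)" if "i < length Bcols" for i k
    using that B(2) Gz0 by (simp add: Bcols_def)
  have Adeg: "(Acols ! i) k \<in> Gz G (c i - c' k)" if "i < length Acols" for i k
    using that A(2) Gz0 by (simp add: Acols_def)
  have hB: "(\<Sum>k<t. h k * (Bcols ! i) k) = h' i" if "i < t'" for i
    using that B(1)[OF that] by (simp add: Bcols_def)
  have hA: "(\<Sum>i<t'. h' i * (Acols ! k) i) = h k" if "k < t" for k
    using that A(1)[OF that] by (simp add: Acols_def)
  have wsS: "set ws \<subseteq> Syz t' h'" and wsR: "Syz t' h' = rspan ws" and wsH: "\<forall>w\<in>set ws. hvec c' w"
    using ws unfolding hgen_def fgen_def by auto
  have Bsup: "lc Bcols v k = 0" if "k \<ge> t" for v k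
    using that by (auto simp: lc_def Bcols_def)
  have BS: "lc Bcols s \<in> Syz t h" if "s \<in> Syz t' h'" for s
  proof -
    have "(\<Sum>k<t. h k * lc Bcols s k) = (\<Sum>i<t'. h' i * s i)"
      unfolding hsum lB by (rule sum.cong) (auto simp: hB)
    also have "\<dots> = 0" using that by (simp add: Syz_def)
    finally show ?thesis using Bsup by (auto simp: Syz_def)
  qed
  have SS: "S ! k \<in> Syz t h" if "k < t" for k
  proof -
    have "(\<Sum>j<t. h j * (S ! k) j) = (\<Sum>j<t. h j * unitv k j) - (\<Sum>j<t. h j * lc Bcols (Acols ! k) j)"
      using that by (simp add: S_def right_diff_distrib sum_subtractf)
    also have "(\<Sum>j<t. h j * unitv k j) = (\<Sum>j<t. if j = k then h j else 0)"
      by (rule sum.cong) (auto simp: unitv_def)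
    also have "\<dots> = h k" using that by (subst sum.delta) auto
    also have "(\<Sum>j<t. h j * lc Bcols (Acols ! k) j) = (\<Sum>i<t'. h' i * (Acols ! k) i)"
      unfolding hsum lB by (rule sum.cong) (auto simp: hB)
    also have "\<dots> = h k" using hA[OF that] .
    finally have "(\<Sum>j<t. h j * (S ! k) j) = 0" by simp
    moreover have "(S ! k) j = 0" if "j \<ge> t" for j
      using that \<open>k < t\<close> Bsup by (simp add: S_def unitv_def)
    ultimately show ?thesis by (simp add: Syz_def)
  qed
  have sub: "set ws' \<subseteq> Syz t h"
    using BS wsS SS lS by (auto simp: ws'_def in_set_conv_nth)
  have span: "r \<in> rspan ws'" if r: "r \<in> Syz t h" for r
  proof -
    define y where "y = lc Acols r"
    have ysup: "y i = 0" if "i \<ge> t'" for i using that by (simp add: y_def lc_def Acols_def)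
    have "(\<Sum>i<t'. h' i * y i) = (\<Sum>k<t. h k * r k)"
      unfolding y_def hsum lA by (rule sum.cong) (auto simp: hA)
    also have "\<dots> = 0" using r by (simp add: Syz_def)
    finally have "y \<in> Syz t' h'" using ysup by (simp add: Syz_def)
    hence "y \<in> rspan ws" using wsR by simp
    then obtain \<rho> where rho: "y = lc ws \<rho>" unfolding rspan_def by blast
    have r1: "lc Bcols y \<in> rspan ws'"
    proof -
      have "lc Bcols y = lc (map (lc Bcols) ws) \<rho>" unfolding rho by (rule lc_lc)
      moreover have "rspan (map (lc Bcols) ws) \<subseteq> rspan ws'" by (rule rspan_mono) (auto simp: ws'_def)
      moreover have "lc (map (lc Bcols) ws) \<rho> \<in> rspan (map (lc Bcols) ws)" by (rule lc_in_rspan)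
      ultimately show ?thesis by auto
    qed
    have rsup: "\<forall>i\<ge>t. r i = 0" using r by (simp add: Syz_def)
    have r2: "(\<lambda>j. r j - lc Bcols y j) = lc S r"
    proof
      fix j
      have "lc Bcols y = lc (map (lc Bcols) Acols) r" unfolding y_def by (rule lc_lc)
      hence "r j - lc Bcols y j = lc (map unitv [0..<t]) r j - lc (map (lc Bcols) Acols) r j"
        using lc_unit[OF rsup] by simp
      also have "\<dots> = (\<Sum>k<t. unitv k j * r k) - (\<Sum>k<t. lc Bcols (Acols ! k) j * r k)"
        by (simp add: lc_def lA)
      also have "\<dots> = (\<Sum>k<t. (unitv k j - lc Bcols (Acols ! k) j) * r k)"
        by (simp add: sum_subtractf left_diff_distrib)
      also have "\<dots> = lc S r j"
        unfolding lc_def[of S r] lS by (rule sum.cong) (simp_all add: S_def)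
      finally show "r j - lc Bcols y j = lc S r j" .
    qed
    have r3: "lc S r \<in> rspan ws'"
    proof -
      have "lc S r \<in> rspan S" by (rule lc_in_rspan)
      moreover have "rspan S \<subseteq> rspan ws'" by (rule rspan_mono) (auto simp: ws'_def)
      ultimately show ?thesis by auto
    qed
    have cl: "\<forall>v\<in>rspan ws'. \<forall>w\<in>rspan ws'. (\<lambda>i. v i + w i) \<in> rspan ws'"
      using submod_rspan[of ws'] unfolding submod_def by (elim conjE)
    have "(\<lambda>j. lc Bcols y j + lc S r j) \<in> rspan ws'"
      by (rule cl[rule_format, OF r1 r3])
    moreover have "(\<lambda>j. lc Bcols y j + lc S r j) = r"
    proof
      fix j
      have e: "lc S r j = r j - lc Bcols y j" using fun_cong[OF r2, of j] by simp
      show "lc Bcols y j + lc S r j = r j" unfolding e by simp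
    qed
    ultimately show ?thesis by simp
  qed
  have hv: "hvec c w" if "w \<in> set ws'" for w
  proof -
    from that consider "w \<in> lc Bcols ` set ws" | "w \<in> set S" by (auto simp: ws'_def)
    thus ?thesis
    proof cases
      case 1
      then obtain s where s: "s \<in> set ws" "w = lc Bcols s" by blast
      obtain \<delta> where d: "\<And>i. s i \<in> Gz G (\<delta> - c' i)" using wsH s(1) unfolding hvec_def by blast
      have "\<forall>k. w k \<in> Gz G (\<delta> - c k)" using s(2) hvec_lc[OF Bdeg d] by simp
      thus ?thesis unfolding hvec_def by blast
    next
      case 2
      then obtain k where k: "k < t" "w = S ! k" using lS by (auto simp: in_set_conv_nth)
      have "w j \<in> Gz G (c k - c j)" for j
      proof -
        have "unitv k j \<in> Gz G (c k - c j)" by (auto simp: unitv_def Gz0 Gz1)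
        moreover have "lc Bcols (Acols ! k) j \<in> Gz G (c k - c j)"
          by (rule hvec_lc[OF Bdeg]) (use Adeg lA k in auto)
        ultimately show ?thesis using k by (simp add: S_def Gzdiff)
      qed
      thus ?thesis unfolding hvec_def by blast
    qed
  qed
  have "hgen (Syz t h) c ws'"
    unfolding hgen_def using fgenI[OF submod_Syz sub span] hv by blast
  thus ?thesis by blast
qed

end

lemma ext_gen:
  fixes f :: "nat \<Rightarrow> 'r::ring_1" and s :: nat
  shows "rideal_gen ((f(s := x)) ` {..<Suc s}) = {j + x * r | j r. j \<in> rideal_gen (f ` {..<s})}"
proof (intro set_eqI iffI)
  fix y assume "y \<in> rideal_gen ((f(s := x)) ` {..<Suc s})"
  then obtain a where a: "y = (\<Sum>i<Suc s. (f(s := x)) i * a i)" unfolding rideal_gen_idx by blast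
  have "(\<Sum>i<s. (f(s := x)) i * a i) = (\<Sum>i<s. f i * a i)" by (rule sum.cong) auto
  hence "y = (\<Sum>i<s. f i * a i) + x * a s" using a by simp
  moreover have "(\<Sum>i<s. f i * a i) \<in> rideal_gen (f ` {..<s})" unfolding rideal_gen_idx by blast
  ultimately show "y \<in> {j + x * r | j r. j \<in> rideal_gen (f ` {..<s})}" by blast
next
  fix y assume "y \<in> {j + x * r | j r. j \<in> rideal_gen (f ` {..<s})}"
  then obtain j r where jr: "y = j + x * r" "j \<in> rideal_gen (f ` {..<s})" by blast
  then obtain a where a: "j = (\<Sum>i<s. f i * a i)" unfolding rideal_gen_idx by blast
  have "(\<Sum>i<s. (f(s := x)) i * (a(s := r)) i) = (\<Sum>i<s. f i * a i)" by (rule sum.cong) auto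
  hence "y = (\<Sum>i<Suc s. (f(s := x)) i * (a(s := r)) i)" using jr a by simp
  thus "y \<in> rideal_gen ((f(s := x)) ` {..<Suc s})" unfolding rideal_gen_idx by blast
qed

context grad
begin

lemma extend_step:
  fixes f cc :: "nat \<Rightarrow> 'r" and s p :: nat
  assumes f: "\<And>i. i < s \<Longrightarrow> f i \<in> Gz G (\<phi> i)"
    and Sf: "hgen (Syz s f) \<phi> ws"
    and x: "x \<in> Gz G \<xi>"
    and cc: "\<And>q. q < p \<Longrightarrow> cc q \<in> Gz G (\<kappa> q)"
    and C: "{a. x * a \<in> rideal_gen (f ` {..<s})} = rideal_gen (cc ` {..<p})"
  shows "\<exists>ws'. hgen (Syz (Suc s) (f(s := x))) (\<phi>(s := \<xi>)) ws'"
proof -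
  let ?J = "rideal_gen (f ` {..<s})"
  let ?h = "f(s := x)"
  let ?c = "\<phi>(s := \<xi>)"
  have xcc: "x * cc q \<in> ?J" if "q < p" for q
  proof -
    have "cc q \<in> rideal_gen (cc ` {..<p})" using that by (intro rideal_gen_base) auto
    thus ?thesis unfolding C[symmetric] by simp
  qed
  have xccdeg: "x * cc q \<in> Gz G (\<xi> + \<kappa> q)" if "q < p" for q
    using Gzmult[OF x cc[OF that]] .
  have "\<exists>U. \<forall>q<p. x * cc q = (\<Sum>i<s. f i * U i q) \<and> (\<forall>i. U i q \<in> Gz G ((\<xi> + \<kappa> q) - \<phi> i))"
    by (rule homog_coeffs[where h="\<lambda>q. x * cc q" and h'=f and t=p and t'=s and c="\<lambda>q. \<xi> + \<kappa> q" and c'=\<phi>])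
      (auto intro: xccdeg f xcc)
  then obtain U where U0: "\<forall>q<p. x * cc q = (\<Sum>i<s. f i * U i q) \<and> (\<forall>i. U i q \<in> Gz G ((\<xi> + \<kappa> q) - \<phi> i))"
    by blast
  have U: "\<And>q. q < p \<Longrightarrow> x * cc q = (\<Sum>i<s. f i * U i q)"
    "\<And>q i. q < p \<Longrightarrow> U i q \<in> Gz G ((\<xi> + \<kappa> q) - \<phi> i)" using U0 by blast+
  define Q where "Q = map (\<lambda>q i. if i < s then - U i q else if i = s then cc q else 0) [0..<p]"
  define ws' where "ws' = ws @ Q"
  have lQ: "length Q = p" by (simp add: Q_def)
  have wsS: "set ws \<subseteq> Syz s f" and wsR: "Syz s f = rspan ws" and wsH: "\<forall>w\<in>set ws. hvec \<phi> w"
    using Sf unfolding hgen_def fgen_def by auto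
  have hsplit: "(\<Sum>i<Suc s. ?h i * v i) = (\<Sum>i<s. f i * v i) + x * v s" for v
  proof -
    have "(\<Sum>i<s. ?h i * v i) = (\<Sum>i<s. f i * v i)" by (rule sum.cong) auto
    thus ?thesis by simp
  qed
  have ws_in: "w \<in> Syz (Suc s) ?h" if "w \<in> set ws" for w
  proof -
    have w: "w \<in> Syz s f" using wsS that by blast
    hence "(\<Sum>i<Suc s. ?h i * w i) = 0" unfolding hsplit by (simp add: Syz_def)
    thus ?thesis using w by (simp add: Syz_def)
  qed
  have Q_in: "Q ! q \<in> Syz (Suc s) ?h" if q: "q < p" for q
  proof -
    have "(\<Sum>i<s. f i * (Q ! q) i) = - (\<Sum>i<s. f i * U i q)"
      by (simp add: Q_def q sum_negf[symmetric])
    hence "(\<Sum>i<Suc s. ?h i * (Q ! q) i) = 0" unfolding hsplit using U(1)[OF q] q by (simp add: Q_def)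
    moreover have "\<forall>i\<ge>Suc s. (Q ! q) i = 0" using q by (simp add: Q_def)
    ultimately show ?thesis by (simp add: Syz_def)
  qed
  have sub: "set ws' \<subseteq> Syz (Suc s) ?h"
    using ws_in Q_in lQ by (auto simp: ws'_def in_set_conv_nth)
  have span: "z \<in> rspan ws'" if z: "z \<in> Syz (Suc s) ?h" for z
  proof -
    have z0: "(\<Sum>i<s. f i * z i) + x * z s = 0" using z unfolding Syz_def hsplit[symmetric] by simp
    have zsup: "\<forall>i\<ge>Suc s. z i = 0" using z by (simp add: Syz_def)
    have xz: "x * z s = (\<Sum>i<s. f i * (- z i))" using z0 by (simp add: sum_negf eq_neg_iff_add_eq_0 add.commute)
    have "x * z s \<in> ?J" unfolding rideal_gen_idx by (rule exI[of _ "\<lambda>i. - z i"]) (rule xz)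
    hence "z s \<in> rideal_gen (cc ` {..<p})" unfolding C[symmetric] by simp
    then obtain \<tau> where tau: "z s = (\<Sum>q<p. cc q * \<tau> q)" unfolding rideal_gen_idx by blast
    define y where "y = (\<lambda>i. if i < s then z i + (\<Sum>q<p. U i q * \<tau> q) else 0)"
    have "(\<Sum>i<s. f i * y i) = (\<Sum>i<s. f i * z i) + (\<Sum>i<s. \<Sum>q<p. f i * U i q * \<tau> q)"
      by (simp add: y_def distrib_left sum.distrib sum_distrib_left mult.assoc)
    also have "(\<Sum>i<s. \<Sum>q<p. f i * U i q * \<tau> q) = (\<Sum>q<p. (\<Sum>i<s. f i * U i q) * \<tau> q)"
      by (subst sum.swap) (simp add: sum_distrib_right)
    also have "\<dots> = (\<Sum>q<p. x * cc q * \<tau> q)" by (rule sum.cong) (simp_all add: U(1))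
    also have "\<dots> = x * z s" by (simp add: tau sum_distrib_left mult.assoc)
    finally have "(\<Sum>i<s. f i * y i) = 0" using z0 by simp
    hence "y \<in> Syz s f" by (simp add: Syz_def y_def)
    hence "y \<in> rspan ws" using wsR by simp
    moreover have "rspan ws \<subseteq> rspan ws'" by (rule rspan_mono) (auto simp: ws'_def)
    ultimately have y1: "y \<in> rspan ws'" by blast
    have "lc Q \<tau> \<in> rspan Q" by (rule lc_in_rspan)
    moreover have "rspan Q \<subseteq> rspan ws'" by (rule rspan_mono) (auto simp: ws'_def)
    ultimately have y2: "lc Q \<tau> \<in> rspan ws'" by blast
    have cl: "\<forall>v\<in>rspan ws'. \<forall>w\<in>rspan ws'. (\<lambda>i. v i + w i) \<in> rspan ws'"
      using submod_rspan[of ws'] unfolding submod_def by (elim conjE)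
    have sum_in: "(\<lambda>i. y i + lc Q \<tau> i) \<in> rspan ws'" by (rule cl[rule_format, OF y1 y2])
    have "(\<lambda>i. y i + lc Q \<tau> i) = z"
    proof
      fix i
      have lcQ: "lc Q \<tau> i = (\<Sum>q<p. (if i < s then - U i q else if i = s then cc q else 0) * \<tau> q)"
        unfolding lc_def lQ by (rule sum.cong) (simp_all add: Q_def)
      show "y i + lc Q \<tau> i = z i"
      proof (cases "i < s")
        case True thus ?thesis by (simp add: lcQ y_def sum_negf)
      next
        case False
        show ?thesis
        proof (cases "i = s")
          case True
          from True lcQ have "lc Q \<tau> s = (\<Sum>q<p. cc q * \<tau> q)" by simp
          thus ?thesis using True by (simp add: y_def tau)
        next
          case False
          hence "i \<ge> Suc s" using \<open>\<not> i < s\<close> by simp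
          thus ?thesis using zsup \<open>\<not> i < s\<close> False by (simp add: lcQ y_def)
        qed
      qed
    qed
    thus ?thesis using sum_in by simp
  qed
  have hv: "hvec ?c w" if "w \<in> set ws'" for w
  proof -
    from that consider "w \<in> set ws" | "w \<in> set Q" by (auto simp: ws'_def)
    thus ?thesis
    proof cases
      case 1
      obtain \<delta> where d: "\<And>i. w i \<in> Gz G (\<delta> - \<phi> i)" using wsH 1 unfolding hvec_def by blast
      have ws0: "w s = 0" using wsS 1 by (auto simp: Syz_def)
      have "w i \<in> Gz G (\<delta> - ?c i)" for i using d[of i] ws0 Gz0 by (cases "i = s") auto
      thus ?thesis unfolding hvec_def by blast
    next
      case 2
      then obtain q where q: "q < p" "w = Q ! q" using lQ by (auto simp: in_set_conv_nth)
      have "w i \<in> Gz G ((\<xi> + \<kappa> q) - ?c i)" for i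
      proof -
        consider "i < s" | "i = s" | "i > s" by linarith
        thus ?thesis
        proof cases
          case 1 thus ?thesis using q U(2)[OF q(1)] Gzneg by (simp add: Q_def)
        next
          case 2 thus ?thesis using q cc[OF q(1)] by (simp add: Q_def)
        next
          case 3 thus ?thesis using q Gz0 by (simp add: Q_def)
        qed
      qed
      thus ?thesis unfolding hvec_def by blast
    qed
  qed
  have "hgen (Syz (Suc s) ?h) ?c ws'"
    unfolding hgen_def using fgenI[OF submod_Syz sub span] hv by blast
  thus ?thesis by blast
qed

end

context grad
begin

lemma hom_gens:
  assumes "fg_hom_right_ideal G J"
  shows "\<exists>s f \<phi>. (\<forall>i<s. f i \<in> Gz G (\<phi> i)) \<and> J = rideal_gen (f ` {..<(s::nat)})"
proof -
  obtain X where X: "finite X" "J = rideal_gen X" using assms unfolding fg_hom_right_ideal_def by blast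
  have hom: "\<And>x d. x \<in> J \<Longrightarrow> comp G d x \<in> J"
    using assms unfolding fg_hom_right_ideal_def hom_right_ideal_def by blast
  obtain xs where xs: "set xs = X" using finite_list[OF X(1)] by blast
  define D where "D = Max (insert 0 (\<Union>x\<in>X. {d. comp G d x \<noteq> 0}))"
  have finU: "finite (insert 0 (\<Union>x\<in>X. {d. comp G d x \<noteq> 0}))" using X(1) comp_fin by auto
  have Dbound: "{d. comp G d x \<noteq> 0} \<subseteq> {..D}" if "x \<in> X" for x
    using Max_ge[OF finU] that unfolding D_def by auto
  define L where "L = concat (map (\<lambda>x. map (\<lambda>d. (comp G d x, d)) [0..<Suc D]) xs)"
  define f where "f = (\<lambda>i. fst (L ! i))"
  define \<phi> where "\<phi> = (\<lambda>i. int (snd (L ! i)))"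
  have setL: "set L = (\<Union>x\<in>X. (\<lambda>d. (comp G d x, d)) ` {..D})"
    unfolding L_def set_concat set_map set_upt atLeast0LessThan lessThan_Suc_atMost xs image_image ..
  have sL: "set L = (\<lambda>i. L ! i) ` {..<length L}" by (metis atLeast0LessThan list.set_map map_nth set_upt)
  have img: "f ` {..<length L} = fst ` set L"
    unfolding f_def sL image_image ..
  have fdeg: "\<forall>i<length L. f i \<in> Gz G (\<phi> i)"
  proof (intro allI impI)
    fix i assume "i < length L"
    hence "L ! i \<in> set L" by simp
    then obtain x d where "L ! i = (comp G d x, d)" using setL by blast
    thus "f i \<in> Gz G (\<phi> i)" by (simp add: f_def \<phi>_def Gz_nat comp_in)
  qed
  have RJ: "right_ideal J" using X(2) rideal_gen_right_ideal by simp
  have RF: "right_ideal (rideal_gen (f ` {..<length L}))" by (rule rideal_gen_right_ideal)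
  have "J \<subseteq> rideal_gen (f ` {..<length L})"
    unfolding X(2)
  proof (rule rideal_gen_min[OF RF], rule subsetI)
    fix x assume x: "x \<in> X"
    have "x = (\<Sum>d\<in>{..D}. comp G d x)" by (rule comp_sum_bound) (use Dbound x in auto)
    also have "\<dots> \<in> rideal_gen (f ` {..<length L})"
    proof (rule right_ideal_sum[OF RF])
      fix d assume "d \<in> {..D}"
      hence "comp G d x \<in> f ` {..<length L}" unfolding img setL using x by force
      thus "comp G d x \<in> rideal_gen (f ` {..<length L})" by (rule rideal_gen_base)
    qed
    finally show "x \<in> rideal_gen (f ` {..<length L})" .
  qed
  moreover have "rideal_gen (f ` {..<length L}) \<subseteq> J"
  proof (rule rideal_gen_min[OF RJ], rule subsetI)
    fix y assume "y \<in> f ` {..<length L}"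
    then obtain x d where "x \<in> X" "y = comp G d x" unfolding img setL by auto
    thus "y \<in> J" using hom X(2) rideal_gen_base by blast
  qed
  ultimately show ?thesis using fdeg by blast
qed

lemma syz_induct:
  assumes RF: "rate_filtration G F"
    and mu: "\<And>I J. I \<in> F \<Longrightarrow> J \<in> F \<Longrightarrow> J \<subset> I \<Longrightarrow> (\<mu> :: 'r set \<Rightarrow> nat) J < \<mu> I"
  shows "I \<in> F \<Longrightarrow> (\<forall>i<t. h i \<in> Gz G (c i)) \<Longrightarrow> rideal_gen (h ` {..<(t::nat)}) = I
     \<Longrightarrow> \<exists>ws. hgen (Syz t h) c ws"
proof (induction "\<mu> I" arbitrary: I t h c rule: less_induct)
  case less
  note IH = less.hyps and I = less.prems(1) and hdeg = less.prems(2) and hI = less.prems(3)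
  have fgF: "\<And>K. K \<in> F \<Longrightarrow> fg_hom_right_ideal G K" using RF unfolding rate_filtration_def by blast
  show ?case
  proof (cases "I = {0}")
    case True
    have "h i = 0" if "i < t" for i
    proof -
      have "h i \<in> I" unfolding hI[symmetric] using that by (intro rideal_gen_base) auto
      thus ?thesis using True by simp
    qed
    thus ?thesis by (rule syz_zero)
  next
    case False
    have allF: "\<forall>I\<in>F. I \<noteq> {0} \<longrightarrow>
        (\<exists>J\<in>F. \<exists>x. J \<noteq> I \<and> homogeneous G x \<and> x \<in> I \<and>
           I = {j + x * r | j r. j \<in> J} \<and> mdeg G J \<le> mdeg G I \<and>
           {a. x * a \<in> J} \<in> F)"
      using RF unfolding rate_filtration_def by (elim conjE)
    have ex: "\<exists>J\<in>F. \<exists>x. J \<noteq> I \<and> homogeneous G x \<and> x \<in> I \<and>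
           I = {j + x * r | j r. j \<in> J} \<and> mdeg G J \<le> mdeg G I \<and>
           {a. x * a \<in> J} \<in> F"
      using allF[rule_format, OF I False] .
    then obtain J x where J: "J \<in> F" "J \<noteq> I" "homogeneous G x" "x \<in> I"
      "I = {j + x * r | j r. j \<in> J}" "{a. x * a \<in> J} \<in> F"
      by (elim bexE exE conjE) (rule that)
    have JI: "J \<subseteq> I"
    proof
      fix j assume "j \<in> J"
      hence "j + x * 0 \<in> {j + x * r | j r. j \<in> J}"
        by (intro CollectI exI[of _ j] exI[of _ 0]) simp
      thus "j \<in> I" using J(5) by simp
    qed
    have lt: "\<mu> J < \<mu> I" using mu[OF I J(1) psubsetI[OF JI J(2)]] .
    obtain e where e: "x \<in> G e" using J(3) unfolding homogeneous_def by blast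
    obtain s f \<phi> where f: "\<forall>i<s. f i \<in> Gz G (\<phi> i)" "J = rideal_gen (f ` {..<(s::nat)})"
      using hom_gens[OF fgF[OF J(1)]] by blast
    obtain p cc \<kappa> where cc: "\<forall>q<p. cc q \<in> Gz G (\<kappa> q)" "{a. x * a \<in> J} = rideal_gen (cc ` {..<(p::nat)})"
      using hom_gens[OF fgF[OF J(6)]] by blast
    obtain ws where ws: "hgen (Syz s f) \<phi> ws"
      using IH[OF lt J(1) f(1) f(2)[symmetric]] by blast
    have "\<exists>ws'. hgen (Syz (Suc s) (f(s := x))) (\<phi>(s := int e)) ws'"
      by (rule extend_step[where \<kappa>=\<kappa>]) (use f cc ws e in \<open>auto simp: Gz_nat\<close>)
    then obtain ws' where ws': "hgen (Syz (Suc s) (f(s := x))) (\<phi>(s := int e)) ws'" by blast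
    have eq: "rideal_gen (h ` {..<t}) = rideal_gen ((f(s := x)) ` {..<Suc s})"
      unfolding hI ext_gen f(2)[symmetric] using J(5) .
    have deg': "(f(s := x)) i \<in> Gz G ((\<phi>(s := int e)) i)" if "i < Suc s" for i
      using that f(1) e by (cases "i = s") (auto simp: Gz_nat)
    show ?thesis
      by (rule change_gens[OF _ deg' eq ws']) (use hdeg in auto)
  qed
qed

end

locale kalg = grad +
  assumes central: "a \<in> G 0 \<Longrightarrow> a * x = x * a"
    and inverse: "a \<in> G 0 \<Longrightarrow> a \<noteq> 0 \<Longrightarrow> \<exists>b\<in>G 0. a * b = 1"
begin

lemma G0mult: "a \<in> G 0 \<Longrightarrow> b \<in> G 0 \<Longrightarrow> a * b \<in> G 0"
  using Gmult[of a 0 b 0] by simp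

lemma G0neg1: "- 1 \<in> G 0" using Gneg[OF G1] .

definition subsp where
  "subsp V \<longleftrightarrow> 0 \<in> V \<and> (\<forall>v\<in>V. \<forall>w\<in>V. v + w \<in> V) \<and> (\<forall>a\<in>G 0. \<forall>v\<in>V. a * v \<in> V)"

lemma subsp_diff: "subsp V \<Longrightarrow> v \<in> V \<Longrightarrow> w \<in> V \<Longrightarrow> v - w \<in> V"
proof -
  assume V: "subsp V" and v: "v \<in> V" and w: "w \<in> V"
  have "(- 1) * w \<in> V" using V w G0neg1 unfolding subsp_def by blast
  hence "v + (- 1) * w \<in> V" using V v unfolding subsp_def by blast
  thus ?thesis by simp
qed

lemma subsp_smul: "subsp V \<Longrightarrow> a \<in> G 0 \<Longrightarrow> v \<in> V \<Longrightarrow> a * v \<in> V"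
  unfolding subsp_def by blast

lemma subsp_add: "subsp V \<Longrightarrow> v \<in> V \<Longrightarrow> w \<in> V \<Longrightarrow> v + w \<in> V"
  unfolding subsp_def by blast

definition Sp where
  "Sp T i = {(\<Sum>j\<in>{i..<length T}. c j * T ! j) | c. \<forall>j. c j \<in> G 0}"

lemma Sp_end: "Sp T (length T) = {0}"
  unfolding Sp_def by (auto intro: exI[of _ "\<lambda>_. 0"] simp: G0)

lemma Sp_subsp: "subsp (Sp T i)"
proof -
  have z: "0 \<in> Sp T i" unfolding Sp_def by (intro CollectI exI[of _ "\<lambda>_. 0"]) (simp add: G0)
  have a: "v + w \<in> Sp T i" if "v \<in> Sp T i" "w \<in> Sp T i" for v w
  proof -
    from that(1) obtain c where c: "v = (\<Sum>j\<in>{i..<length T}. c j * T ! j)" "\<forall>j. c j \<in> G 0"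
      unfolding Sp_def by blast
    from that(2) obtain d where d: "w = (\<Sum>j\<in>{i..<length T}. d j * T ! j)" "\<forall>j. d j \<in> G 0"
      unfolding Sp_def by blast
    have "v + w = (\<Sum>j\<in>{i..<length T}. (c j + d j) * T ! j)"
      by (simp add: c d sum.distrib distrib_right)
    moreover have "\<forall>j. c j + d j \<in> G 0" using c d Gadd by blast
    ultimately show ?thesis unfolding Sp_def by (intro CollectI exI[of _ "\<lambda>j. c j + d j"]) simp
  qed
  have m: "a * v \<in> Sp T i" if "a \<in> G 0" "v \<in> Sp T i" for a v
  proof -
    from that(2) obtain c where c: "v = (\<Sum>j\<in>{i..<length T}. c j * T ! j)" "\<forall>j. c j \<in> G 0"
      unfolding Sp_def by blast
    have "a * v = (\<Sum>j\<in>{i..<length T}. (a * c j) * T ! j)"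
      by (simp add: c sum_distrib_left mult.assoc)
    moreover have "\<forall>j. a * c j \<in> G 0" using c that(1) G0mult by blast
    ultimately show ?thesis unfolding Sp_def by (intro CollectI exI[of _ "\<lambda>j. a * c j"]) simp
  qed
  show ?thesis unfolding subsp_def using z a m by blast
qed

lemma Sp_step:
  assumes i: "i < length T" and v: "v \<in> Sp T i"
  shows "\<exists>a\<in>G 0. \<exists>w\<in>Sp T (Suc i). v = a * T ! i + w"
proof -
  from v obtain c where c: "v = (\<Sum>j\<in>{i..<length T}. c j * T ! j)" "\<forall>j. c j \<in> G 0"
    unfolding Sp_def by blast
  have "{i..<length T} = insert i {Suc i..<length T}" using i by auto
  hence "v = c i * T ! i + (\<Sum>j\<in>{Suc i..<length T}. c j * T ! j)" using c(1) by simp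
  moreover have "(\<Sum>j\<in>{Suc i..<length T}. c j * T ! j) \<in> Sp T (Suc i)" unfolding Sp_def using c(2) by blast
  ultimately show ?thesis using c(2) by blast
qed

lemma Sp_Suc_sub: "Sp T (Suc i) \<subseteq> Sp T i"
proof
  fix v assume "v \<in> Sp T (Suc i)"
  then obtain c where c: "v = (\<Sum>j\<in>{Suc i..<length T}. c j * T ! j)" "\<forall>j. c j \<in> G 0"
    unfolding Sp_def by blast
  let ?c = "\<lambda>j. if j = i then 0 else c j"
  have "(\<Sum>j\<in>{i..<length T}. ?c j * T ! j) = (\<Sum>j\<in>{Suc i..<length T}. ?c j * T ! j)"
    by (rule sum.mono_neutral_right) auto
  also have "\<dots> = v" unfolding c(1) by (rule sum.cong) auto
  finally show "v \<in> Sp T i" unfolding Sp_def using c(2) G0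
    by (intro CollectI exI[of _ ?c]) auto
qed

definition pivots where
  "pivots T V = {i. i < length T \<and> (\<exists>v\<in>V. v \<in> Sp T i \<and> v \<notin> Sp T (Suc i))}"

lemma pivots_mono: "V \<subseteq> V' \<Longrightarrow> pivots T V \<subseteq> pivots T V'"
  unfolding pivots_def by blast

lemma pivots_strict:
  assumes V: "subsp V" and V': "subsp V'" and sub: "V \<subseteq> V'" and top: "V' \<subseteq> Sp T 0"
    and ne: "V \<noteq> V'"
  shows "pivots T V \<subset> pivots T V'"
proof (rule ccontr)
  assume "\<not> pivots T V \<subset> pivots T V'"
  hence eqp: "pivots T V = pivots T V'" using pivots_mono[OF sub] by blast
  define P where "P = {i. i \<le> length T \<and> (\<exists>v'\<in>V'. v' \<notin> V \<and> v' \<in> Sp T i)}"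
  obtain v0 where v0: "v0 \<in> V'" "v0 \<notin> V" using sub ne by blast
  have "0 \<in> P" unfolding P_def using v0 top by auto
  have finP: "finite P" unfolding P_def by simp
  define i where "i = Max P"
  have iP: "i \<in> P" unfolding i_def using finP \<open>0 \<in> P\<close> by (intro Max_in) auto
  have imax: "\<And>k. k \<in> P \<Longrightarrow> k \<le> i" unfolding i_def using finP by simp
  obtain v' where v': "v' \<in> V'" "v' \<notin> V" "v' \<in> Sp T i" and iN: "i \<le> length T"
    using iP unfolding P_def by blast
  have iN': "i < length T"
  proof (rule ccontr)
    assume "\<not> i < length T"
    hence "i = length T" using iN by simp
    hence "v' = 0" using v'(3) Sp_end by simp
    thus False using v'(2) V unfolding subsp_def by simp
  qed
  have notS: "v' \<notin> Sp T (Suc i)"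
  proof
    assume "v' \<in> Sp T (Suc i)"
    hence "Suc i \<in> P" unfolding P_def using v' iN' by auto
    thus False using imax by fastforce
  qed
  have "i \<in> pivots T V'" unfolding pivots_def using iN' v' notS by blast
  hence "i \<in> pivots T V" using eqp by simp
  then obtain v where v: "v \<in> V" "v \<in> Sp T i" "v \<notin> Sp T (Suc i)" unfolding pivots_def by blast
  obtain a w where aw: "a \<in> G 0" "w \<in> Sp T (Suc i)" "v = a * T ! i + w" using Sp_step[OF iN' v(2)] by blast
  obtain a' w' where aw': "a' \<in> G 0" "w' \<in> Sp T (Suc i)" "v' = a' * T ! i + w'" using Sp_step[OF iN' v'(3)] by blast
  have "a \<noteq> 0" using aw v(3) by auto
  then obtain b where b: "b \<in> G 0" "a * b = 1" using inverse aw(1) by blast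
  have ba: "b * a = 1" using central[OF b(1), of a] b(2) by simp
  define u where "u = v' - (a' * b) * v"
  have ab0: "a' * b \<in> G 0" using G0mult aw'(1) b(1) by blast
  have "u = a' * T ! i + w' - (a' * b) * (a * T ! i) - (a' * b) * w"
    unfolding u_def aw(3) aw'(3) by (simp add: distrib_left)
  also have "(a' * b) * (a * T ! i) = a' * T ! i" by (simp add: mult.assoc[symmetric]) (simp add: mult.assoc ba)
  finally have u: "u = w' - (a' * b) * w" by simp
  have uS: "u \<in> Sp T (Suc i)" unfolding u
    by (rule subsp_diff[OF Sp_subsp aw'(2)]) (rule subsp_smul[OF Sp_subsp ab0 aw(2)])
  have uV': "u \<in> V'" unfolding u_def
    by (rule subsp_diff[OF V' v'(1)]) (rule subsp_smul[OF V' ab0], use sub v(1) in blast)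
  have uV: "u \<notin> V"
  proof
    assume "u \<in> V"
    hence "u + (a' * b) * v \<in> V" by (rule subsp_add[OF V]) (rule subsp_smul[OF V ab0 v(1)])
    thus False using v'(2) unfolding u_def by simp
  qed
  have "Suc i \<in> P" unfolding P_def using iN' uS uV' uV by auto
  thus False using imax by fastforce
qed

lemma pivots_card:
  assumes "subsp V" "subsp V'" "V \<subseteq> V'" "V' \<subseteq> Sp T 0" "V \<noteq> V'"
  shows "card (pivots T V) < card (pivots T V')"
proof (rule psubset_card_mono)
  show "finite (pivots T V')" unfolding pivots_def by simp
  show "pivots T V \<subset> pivots T V'" by (rule pivots_strict[OF assms])
qed

end

locale stdalg = kalg +
  fixes S0
  assumes genG: "G (Suc n) = add_closure {a * b | a b. a \<in> G n \<and> b \<in> G 1}"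
    and finS: "finite S0" "S0 \<subseteq> G 1"
    and G1S: "G 1 = {sum_list (map (\<lambda>(c, s). c * s) ps) | ps. set ps \<subseteq> G 0 \<times> S0}"
begin

definition SpanW where
  "SpanW W = {(\<Sum>w\<in>W. c w * w) | c. \<forall>w. c w \<in> G 0}"

lemma SpanW_subsp: "subsp (SpanW W)"
proof -
  have z: "0 \<in> SpanW W" unfolding SpanW_def by (intro CollectI exI[of _ "\<lambda>_. 0"]) (simp add: G0)
  have a: "v + w \<in> SpanW W" if "v \<in> SpanW W" "w \<in> SpanW W" for v w
  proof -
    from that(1) obtain c where c: "v = (\<Sum>u\<in>W. c u * u)" "\<forall>u. c u \<in> G 0"
      unfolding SpanW_def by blast
    from that(2) obtain d where d: "w = (\<Sum>u\<in>W. d u * u)" "\<forall>u. d u \<in> G 0"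
      unfolding SpanW_def by blast
    have "v + w = (\<Sum>u\<in>W. (c u + d u) * u)"
      by (simp add: c d sum.distrib distrib_right)
    moreover have "\<forall>u. c u + d u \<in> G 0" using c d Gadd by blast
    ultimately show ?thesis unfolding SpanW_def by (intro CollectI exI[of _ "\<lambda>u. c u + d u"]) simp
  qed
  have m: "a * v \<in> SpanW W" if "a \<in> G 0" "v \<in> SpanW W" for a v
  proof -
    from that(2) obtain c where c: "v = (\<Sum>u\<in>W. c u * u)" "\<forall>u. c u \<in> G 0"
      unfolding SpanW_def by blast
    have "a * v = (\<Sum>u\<in>W. (a * c u) * u)"
      by (simp add: c sum_distrib_left mult.assoc)
    moreover have "\<forall>u. a * c u \<in> G 0" using c that(1) G0mult by blast
    ultimately show ?thesis unfolding SpanW_def by (intro CollectI exI[of _ "\<lambda>u. a * c u"]) simp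
  qed
  show ?thesis unfolding subsp_def using z a m by blast
qed

lemma subsp_sum: "subsp V \<Longrightarrow> (\<And>a. a \<in> A \<Longrightarrow> f a \<in> V) \<Longrightarrow> sum f A \<in> V"
proof (induction A rule: infinite_finite_induct)
  case (infinite A) thus ?case by (simp add: subsp_def)
next
  case empty thus ?case by (simp add: subsp_def)
next
  case (insert x F) thus ?case by (simp add: subsp_add)
qed

lemma subsp_sum_list: "subsp V \<Longrightarrow> set xs \<subseteq> V \<Longrightarrow> sum_list xs \<in> V"
  by (induction xs) (auto simp: subsp_def)

lemma SpanW_min: assumes "subsp V" "W \<subseteq> V" shows "SpanW W \<subseteq> V"
proof
  fix v assume "v \<in> SpanW W"
  then obtain c where c: "v = (\<Sum>u\<in>W. c u * u)" "\<forall>u. c u \<in> G 0" unfolding SpanW_def by blast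
  show "v \<in> V" unfolding c(1)
    by (rule subsp_sum[OF assms(1)]) (use assms c(2) subsp_smul in blast)
qed

lemma SpanW_base: assumes "finite W" "u \<in> W" shows "u \<in> SpanW W"
proof -
  have "(\<Sum>w\<in>W. (if w = u then 1 else 0) * w) = (\<Sum>w\<in>W. if w = u then w else 0)"
    by (rule sum.cong) auto
  also have "\<dots> = u" using assms by (subst sum.delta) auto
  finally have "(\<Sum>w\<in>W. (if w = u then 1 else 0) * w) = u" .
  moreover have "\<forall>w. (if w = u then 1 else 0) \<in> G 0" using G0 G1 by simp
  ultimately show ?thesis unfolding SpanW_def by (intro CollectI exI[of _ "\<lambda>w. if w = u then 1 else 0"]) simp
qed

lemma SpanW_mono: "finite W' \<Longrightarrow> W \<subseteq> W' \<Longrightarrow> SpanW W \<subseteq> SpanW W'"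
  by (rule SpanW_min[OF SpanW_subsp]) (use SpanW_base in blast)

fun Wn where
  "Wn 0 = {1}"
| "Wn (Suc n) = (\<lambda>(w, s). w * s) ` (Wn n \<times> S0)"

lemma Wn_fin: "finite (Wn n)"
  by (induction n) (auto simp: finS)

lemma mult_span: assumes a: "a \<in> SpanW (Wn n)" and s: "s \<in> S0" shows "a * s \<in> SpanW (Wn (Suc n))"
proof -
  from a obtain c where c: "a = (\<Sum>u\<in>Wn n. c u * u)" "\<forall>u. c u \<in> G 0" unfolding SpanW_def by blast
  have "a * s = (\<Sum>u\<in>Wn n. c u * (u * s))" by (simp add: c sum_distrib_right mult.assoc)
  also have "\<dots> \<in> SpanW (Wn (Suc n))"
  proof (rule subsp_sum[OF SpanW_subsp])
    fix u assume "u \<in> Wn n"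
    hence "u * s \<in> Wn (Suc n)" using s by force
    hence "u * s \<in> SpanW (Wn (Suc n))" by (rule SpanW_base[OF Wn_fin])
    thus "c u * (u * s) \<in> SpanW (Wn (Suc n))" by (rule subsp_smul[OF SpanW_subsp c(2)[rule_format]])
  qed
  finally show ?thesis .
qed

lemma G_span: "G n \<subseteq> SpanW (Wn n)"
proof (induction n)
  case 0
  show ?case
  proof
    fix x assume x: "x \<in> G 0"
    have "1 \<in> SpanW (Wn 0)" by (rule SpanW_base) auto
    hence "x * 1 \<in> SpanW (Wn 0)" by (rule subsp_smul[OF SpanW_subsp x])
    thus "x \<in> SpanW (Wn 0)" by simp
  qed
next
  case (Suc n)
  have ab: "a * b \<in> SpanW (Wn (Suc n))" if a: "a \<in> G n" and b: "b \<in> G 1" for a b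
  proof -
    obtain ps where ps: "b = sum_list (map (\<lambda>(c, s). c * s) ps)" "set ps \<subseteq> G 0 \<times> S0"
      using b G1S by blast
    have "set ps \<subseteq> G 0 \<times> S0 \<Longrightarrow> a * sum_list (map (\<lambda>(c, s). c * s) ps) \<in> SpanW (Wn (Suc n))"
    proof (induction ps)
      case Nil thus ?case using SpanW_subsp by (simp add: subsp_def)
    next
      case (Cons p ps)
      obtain c s where p: "p = (c, s)" by (cases p)
      have cs: "c \<in> G 0" "s \<in> S0" using Cons.prems p by auto
      have "a * (c * s) = c * (a * s)"
        by (simp add: mult.assoc[symmetric] central[OF cs(1), of a])
      moreover have "a * s \<in> SpanW (Wn (Suc n))" using mult_span Suc.IH a cs(2) by blast
      ultimately have "a * (c * s) \<in> SpanW (Wn (Suc n))" using subsp_smul[OF SpanW_subsp cs(1)] by simp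
      moreover have "a * sum_list (map (\<lambda>(c, s). c * s) ps) \<in> SpanW (Wn (Suc n))" using Cons by auto
      ultimately show ?case using subsp_add[OF SpanW_subsp] p by (simp add: distrib_left)
    qed
    thus ?thesis using ps by simp
  qed
  show ?case
  proof
    fix x assume "x \<in> G (Suc n)"
    then obtain xs where xs: "x = sum_list xs" "set xs \<subseteq> {a * b | a b. a \<in> G n \<and> b \<in> G 1}"
      unfolding genG add_closure_def by blast
    have "set xs \<subseteq> SpanW (Wn (Suc n))" using xs(2) ab by blast
    thus "x \<in> SpanW (Wn (Suc n))" using subsp_sum_list[OF SpanW_subsp] xs(1) by blast
  qed
qed

definition Low where "Low d = {x. \<forall>e>d. comp G e x = 0}"

lemma Low_span: "Low d \<subseteq> SpanW (\<Union>e\<le>d. Wn e)"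
proof
  fix x assume x: "x \<in> Low d"
  have finW: "finite (\<Union>e\<le>d. Wn e)" using Wn_fin by simp
  have "x = (\<Sum>e\<in>{..d}. comp G e x)"
    by (rule comp_sum_bound) (use x in \<open>auto simp: Low_def not_le[symmetric]\<close>)
  also have "\<dots> \<in> SpanW (\<Union>e\<le>d. Wn e)"
  proof (rule subsp_sum[OF SpanW_subsp])
    fix e assume e: "e \<in> {..d}"
    have "comp G e x \<in> SpanW (Wn e)" using G_span comp_in by blast
    moreover have "SpanW (Wn e) \<subseteq> SpanW (\<Union>e\<le>d. Wn e)" by (rule SpanW_mono[OF finW]) (use e in auto)
    ultimately show "comp G e x \<in> SpanW (\<Union>e\<le>d. Wn e)" by blast
  qed
  finally show "x \<in> SpanW (\<Union>e\<le>d. Wn e)" .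
qed

lemma Low_Sp: "\<exists>T. Low d \<subseteq> Sp T 0"
proof -
  have finW: "finite (\<Union>e\<le>d. Wn e)" using Wn_fin by simp
  obtain T where T: "set T = (\<Union>e\<le>d. Wn e)" "distinct T" using finite_distinct_list[OF finW] by blast
  have "(\<Union>e\<le>d. Wn e) \<subseteq> Sp T 0"
  proof
    fix u assume "u \<in> (\<Union>e\<le>d. Wn e)"
    then obtain k where k: "k < length T" "T ! k = u" using T(1) by (metis in_set_conv_nth)
    have "(\<Sum>j\<in>{0..<length T}. (if j = k then 1 else 0) * T ! j) = (\<Sum>j\<in>{0..<length T}. if j = k then T ! j else 0)"
      by (rule sum.cong) auto
    also have "\<dots> = u" using k by (subst sum.delta) auto
    finally have "(\<Sum>j\<in>{0..<length T}. (if j = k then 1 else 0) * T ! j) = u" .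
    moreover have "\<forall>j. (if j = k then 1 else (0::'a)) \<in> G 0" using G0 G1 by simp
    ultimately show "u \<in> Sp T 0" unfolding Sp_def
      by (intro CollectI exI[of _ "\<lambda>j. if j = k then 1 else 0"]) simp
  qed
  hence "SpanW (\<Union>e\<le>d. Wn e) \<subseteq> Sp T 0" by (rule SpanW_min[OF Sp_subsp])
  thus ?thesis using Low_span by blast
qed

end

context stdalg
begin

lemma mdeg_gens:
  assumes I: "fg_hom_right_ideal G I"
  shows "\<exists>X. X \<subseteq> I \<and> I = rideal_gen X \<and> (\<forall>x\<in>X. x \<in> G (hdeg G x) \<and> hdeg G x \<le> mdeg G I)"
proof -
  obtain s f \<phi> where f: "\<forall>i<s. f i \<in> Gz G (\<phi> i)" "I = rideal_gen (f ` {..<(s::nat)})"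
    using hom_gens[OF I] by blast
  let ?Y = "f ` {..<s}"
  have Yhom: "homogeneous G y" if "y \<in> ?Y" for y
  proof -
    note th = that
    obtain i where i: "i < s" "y = f i" using th by blast
    have "y \<in> Gz G (\<phi> i)" using f(1) i by simp
    thus ?thesis unfolding homogeneous_def Gz_def by (cases "\<phi> i < 0") (auto simp: G0)
  qed
  define P where "P = (\<lambda>Z. Z \<subseteq> ?Y \<and> rideal_gen Z = I)"
  have "P ?Y" unfolding P_def using f(2) by simp
  then obtain Z where Z: "P Z" "\<And>Z'. P Z' \<Longrightarrow> card Z \<le> card Z'"
    using ex_has_least_nat[of P ?Y card] by blast
  have finZ: "finite Z" using Z(1) unfolding P_def using finite_subset by blast
  have "min_hom_gens G I Z"
    unfolding min_hom_gens_def
  proof (intro conjI allI impI ballI)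
    show "finite Z" by (rule finZ)
    show "\<And>x. x \<in> Z \<Longrightarrow> homogeneous G x" using Z(1) Yhom unfolding P_def by blast
    show "rideal_gen Z = I" using Z(1) unfolding P_def by simp
    fix Y' assume Y': "Y' \<subset> Z"
    show "rideal_gen Y' \<noteq> I"
    proof
      assume "rideal_gen Y' = I"
      hence "P Y'" using Y' Z(1) unfolding P_def by blast
      hence "card Z \<le> card Y'" by (rule Z(2))
      moreover have "card Y' < card Z" by (rule psubset_card_mono[OF finZ Y'])
      ultimately show False by simp
    qed
  qed
  hence X0: "min_hom_gens G I (SOME X. min_hom_gens G I X)" by (rule someI)
  define X where "X = (SOME X. min_hom_gens G I X)"
  have X: "finite X" "\<forall>x\<in>X. homogeneous G x" "rideal_gen X = I"
    using X0 unfolding X_def min_hom_gens_def by blast+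
  have md: "mdeg G I = Max (insert 0 (hdeg G ` X))" unfolding mdeg_def X_def ..
  have "x \<in> G (hdeg G x) \<and> hdeg G x \<le> mdeg G I" if x: "x \<in> X" for x
  proof
    obtain e where "x \<in> G e" using X(2) x unfolding homogeneous_def by blast
    thus "x \<in> G (hdeg G x)" unfolding hdeg_def by (rule LeastI)
    show "hdeg G x \<le> mdeg G I" unfolding md using X(1) x by (intro Max_ge) auto
  qed
  moreover have "X \<subseteq> I" using X(3) rideal_gen_base by blast
  ultimately show ?thesis using X(3) by blast
qed

lemma Low_subsp:
  assumes "right_ideal I" shows "subsp (I \<inter> Low d)"
proof -
  have z: "0 \<in> I \<inter> Low d" using assms by (simp add: right_ideal_def Low_def comp_zero)
  have a: "v + w \<in> I \<inter> Low d" if "v \<in> I \<inter> Low d" "w \<in> I \<inter> Low d" for v w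
    using that assms by (simp add: right_ideal_def Low_def comp_add)
  have m: "a * v \<in> I \<inter> Low d" if "a \<in> G 0" "v \<in> I \<inter> Low d" for a v
  proof -
    have "a * v = v * a" using central[OF that(1)] .
    hence "a * v \<in> I" using that(2) assms by (simp add: right_ideal_def)
    moreover have "comp G e (a * v) = 0" if "e > d" for e
      using comp_mult_left[OF \<open>a \<in> G 0\<close>, of e v] \<open>v \<in> I \<inter> Low d\<close> that by (simp add: Low_def)
    ultimately show ?thesis by (simp add: Low_def)
  qed
  show ?thesis unfolding subsp_def using z a m by blast
qed

lemma measure_F:
  "\<exists>\<mu> :: 'a set \<Rightarrow> nat. \<forall>I J. I \<in> {I. fg_hom_right_ideal G I \<and> mdeg G I \<le> d} \<longrightarrow>
      J \<in> {I. fg_hom_right_ideal G I \<and> mdeg G I \<le> d} \<longrightarrow> J \<subset> I \<longrightarrow> \<mu> J < \<mu> I"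
proof -
  obtain T where T: "Low d \<subseteq> Sp T 0" using Low_Sp by blast
  have "card (pivots T (J \<inter> Low d)) < card (pivots T (I \<inter> Low d))"
    if I: "fg_hom_right_ideal G I" "mdeg G I \<le> d" and J: "fg_hom_right_ideal G J" and JI: "J \<subset> I" for I J
  proof (rule pivots_card)
    have RI: "right_ideal I" and RJ: "right_ideal J"
      using I(1) J unfolding fg_hom_right_ideal_def hom_right_ideal_def by blast+
    show "subsp (J \<inter> Low d)" by (rule Low_subsp[OF RJ])
    show "subsp (I \<inter> Low d)" by (rule Low_subsp[OF RI])
    show "J \<inter> Low d \<subseteq> I \<inter> Low d" using JI by blast
    show "I \<inter> Low d \<subseteq> Sp T 0" using T by blast
    show "J \<inter> Low d \<noteq> I \<inter> Low d"
    proof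
      assume eq: "J \<inter> Low d = I \<inter> Low d"
      obtain X where X: "X \<subseteq> I" "I = rideal_gen X" "\<forall>x\<in>X. x \<in> G (hdeg G x) \<and> hdeg G x \<le> mdeg G I"
        using mdeg_gens[OF I(1)] by blast
      have "X \<subseteq> Low d"
      proof
        fix x assume x: "x \<in> X"
        hence "x \<in> G (hdeg G x)" "hdeg G x \<le> d" using X(3) I(2) by auto
        thus "x \<in> Low d" unfolding Low_def by (auto simp: comp_hom)
      qed
      hence "X \<subseteq> J" using X(1) eq by blast
      hence "I \<subseteq> J" using X(2) rideal_gen_min[OF RJ] by simp
      thus False using JI by blast
    qed
  qed
  thus ?thesis by (intro exI[of _ "\<lambda>I. card (pivots T (I \<inter> Low d))"]) auto
qed

end

context stdalg
begin

lemma syz_all: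
  assumes RFd: "\<exists>d0. \<forall>d\<ge>d0. rate_filtration G {I. fg_hom_right_ideal G I \<and> mdeg G I \<le> d}"
    and h: "\<forall>i<t. h i \<in> Gz G (c i)"
  shows "\<exists>ws. hgen (Syz t h) c ws"
proof -
  define I where "I = rideal_gen (h ` {..<t})"
  have RI: "right_ideal I" unfolding I_def by (rule rideal_gen_right_ideal)
  have hom: "comp G d y \<in> I" if y: "y \<in> I" for y d
  proof -
    obtain r where r: "y = (\<Sum>i<t. h i * r i)" using y unfolding I_def rideal_gen_idx by blast
    have "comp G d y = compz (int d) y" by (simp add: compz_def)
    also have "\<dots> = (\<Sum>i<t. compz (int d) (h i * r i))" unfolding r by (rule compz_sum)
    also have "\<dots> = (\<Sum>i<t. h i * compz (int d - c i) (r i))"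
      by (rule sum.cong) (simp_all add: compz_mult_left h)
    finally have cd: "comp G d y = (\<Sum>i<t. h i * compz (int d - c i) (r i))" .
    show ?thesis unfolding I_def rideal_gen_idx by (rule exI[of _ "\<lambda>i. compz (int d - c i) (r i)"]) (rule cd)
  qed
  have fgI: "fg_hom_right_ideal G I"
    unfolding fg_hom_right_ideal_def hom_right_ideal_def using RI hom I_def by blast
  obtain d0 where d0: "\<forall>d\<ge>d0. rate_filtration G {I. fg_hom_right_ideal G I \<and> mdeg G I \<le> d}"
    using RFd by blast
  define d where "d = max d0 (mdeg G I)"
  have RF: "rate_filtration G {I. fg_hom_right_ideal G I \<and> mdeg G I \<le> d}" using d0 d_def by simp
  obtain \<mu> :: "'a set \<Rightarrow> nat" where mu: "\<forall>I J. I \<in> {I. fg_hom_right_ideal G I \<and> mdeg G I \<le> d} \<longrightarrow>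
      J \<in> {I. fg_hom_right_ideal G I \<and> mdeg G I \<le> d} \<longrightarrow> J \<subset> I \<longrightarrow> \<mu> J < \<mu> I"
    using measure_F by blast
  have IF: "I \<in> {I. fg_hom_right_ideal G I \<and> mdeg G I \<le> d}" using fgI d_def by simp
  show ?thesis
    by (rule syz_induct[OF RF, of \<mu>, OF _ IF h]) (use mu I_def in blast)+
qed

definition Kr where
  "Kr n M m' = {v. (\<forall>i\<ge>n. v i = 0) \<and> (\<forall>j<m'. (\<Sum>i<n. M j i * v i) = 0)}"

lemma submod_Kr: "submod (Kr n M m')"
proof -
  have "(\<Sum>i<n. M j i * (v i * c)) = (\<Sum>i<n. M j i * v i) * c" for j v c
    by (simp add: sum_distrib_right mult.assoc)
  thus ?thesis unfolding submod_def Kr_def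
    by (auto simp: distrib_left sum.distrib)
qed

lemma kernel_gen:
  fixes n :: nat and a b :: "nat \<Rightarrow> int" and e :: int and M :: "nat \<Rightarrow> nat \<Rightarrow> 'a"
  assumes RFd: "\<exists>d0. \<forall>d\<ge>d0. rate_filtration G {I. fg_hom_right_ideal G I \<and> mdeg G I \<le> d}"
    and Mdeg: "\<forall>j<m. \<forall>i<n. M j i \<in> Gz G (a i - b j + e)"
  shows "m' \<le> m \<Longrightarrow> \<exists>ws. hgen (Kr n M m') a ws"
proof (induction m')
  case 0
  have "Kr n M 0 = Syz n (\<lambda>_. 0)" by (auto simp: Kr_def Syz_def)
  thus ?case using syz_zero[of n "\<lambda>_. 0" a] by simp
next
  case (Suc m')
  have m'm: "m' < m" using Suc.prems by simp
  obtain ws where ws: "hgen (Kr n M m') a ws" using Suc.IH Suc.prems by auto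
  have wsK: "set ws \<subseteq> Kr n M m'" and wsR: "Kr n M m' = rspan ws" and wsH: "\<forall>w\<in>set ws. hvec a w"
    using ws unfolding hgen_def fgen_def by auto
  let ?L = "length ws"
  have "\<forall>l. \<exists>\<delta>. l < ?L \<longrightarrow> (\<forall>i. (ws ! l) i \<in> Gz G (\<delta> - a i))"
    using wsH unfolding hvec_def by (meson nth_mem)
  from choice[OF this] obtain \<delta> where \<delta>: "\<And>l i. l < ?L \<Longrightarrow> (ws ! l) i \<in> Gz G (\<delta> l - a i)" by blast
  define h where "h = (\<lambda>l. \<Sum>i<n. M m' i * (ws ! l) i)"
  define c where "c = (\<lambda>l. \<delta> l + e - b m')"
  have hdeg: "\<forall>l<?L. h l \<in> Gz G (c l)"
  proof (intro allI impI)
    fix l assume l: "l < ?L"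
    show "h l \<in> Gz G (c l)" unfolding h_def
    proof (rule Gzsum)
      fix i assume "i \<in> {..<n}"
      hence "M m' i * (ws ! l) i \<in> Gz G ((a i - b m' + e) + (\<delta> l - a i))"
        using Mdeg m'm \<delta>[OF l] by (intro Gzmult) auto
      moreover have "(a i - b m' + e) + (\<delta> l - a i) = c l" unfolding c_def by simp
      ultimately show "M m' i * (ws ! l) i \<in> Gz G (c l)" by simp
    qed
  qed
  obtain us where us: "hgen (Syz ?L h) c us" using syz_all[OF RFd hdeg] by blast
  have usS: "set us \<subseteq> Syz ?L h" and usR: "Syz ?L h = rspan us" and usH: "\<forall>u\<in>set us. hvec c u"
    using us unfolding hgen_def fgen_def by auto
  define zs where "zs = map (lc ws) us"
  have rowsum: "(\<Sum>i<n. M j i * lc ws u i) = (\<Sum>l<?L. (\<Sum>i<n. M j i * (ws ! l) i) * u l)" for j u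
    by (rule hsum)
  have lcsup: "lc ws u i = 0" if "i \<ge> n" for u i
  proof -
    have "(ws ! l) i = 0" if "l < ?L" for l
    proof -
      have "ws ! l \<in> Kr n M m'" using wsK nth_mem[OF that] by blast
      thus ?thesis using \<open>i \<ge> n\<close> by (simp add: Kr_def)
    qed
    thus ?thesis unfolding lc_def by simp
  qed
  have sub: "set zs \<subseteq> Kr n M (Suc m')"
  proof
    fix z assume "z \<in> set zs"
    then obtain u where u: "u \<in> set us" "z = lc ws u" unfolding zs_def by auto
    have uS: "u \<in> Syz ?L h" using usS u(1) by blast
    have rows: "(\<Sum>i<n. M j i * z i) = 0" if j: "j < Suc m'" for j
    proof (cases "j < m'")
      case True
      have "(\<Sum>i<n. M j i * (ws ! l) i) = 0" if "l < ?L" for l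
        using wsK nth_mem[OF that] True by (auto simp: Kr_def)
      thus ?thesis unfolding u(2) rowsum by simp
    next
      case False
      hence "j = m'" using j by simp
      thus ?thesis unfolding u(2) rowsum using uS by (simp add: Syz_def h_def)
    qed
    show "z \<in> Kr n M (Suc m')" using rows lcsup u(2) by (simp add: Kr_def)
  qed
  have span: "v \<in> rspan zs" if v: "v \<in> Kr n M (Suc m')" for v
  proof -
    have "v \<in> Kr n M m'" using v by (simp add: Kr_def)
    hence "v \<in> rspan ws" using wsR by simp
    then obtain r where r: "v = lc ws r" unfolding rspan_def by blast
    define r' where "r' = (\<lambda>l. if l < ?L then r l else 0)"
    have rr': "lc ws r' = lc ws r" unfolding lc_def r'_def by (intro ext sum.cong) auto
    have "(\<Sum>l<?L. h l * r' l) = (\<Sum>i<n. M m' i * lc ws r' i)"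
      unfolding rowsum h_def ..
    also have "\<dots> = 0" using v rr' r by (simp add: Kr_def)
    finally have "r' \<in> Syz ?L h" by (simp add: Syz_def r'_def)
    hence "r' \<in> rspan us" using usR by simp
    then obtain s where s: "r' = lc us s" unfolding rspan_def by blast
    have "v = lc zs s" unfolding zs_def r rr'[symmetric] s by (rule lc_lc)
    thus ?thesis using lc_in_rspan by simp
  qed
  have hv: "hvec a z" if "z \<in> set zs" for z
  proof -
    from that obtain u where u: "u \<in> set us" "z = lc ws u" unfolding zs_def by auto
    obtain \<gamma> where g: "\<And>l. u l \<in> Gz G (\<gamma> - c l)" using usH u(1) unfolding hvec_def by blast
    have "z i \<in> Gz G ((\<gamma> - e + b m') - a i)" for i
      unfolding u(2)
    proof (rule hvec_lc[where e=\<delta>])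
      show "\<And>l k. l < ?L \<Longrightarrow> (ws ! l) k \<in> Gz G (\<delta> l - a k)" by (rule \<delta>)
      fix l show "u l \<in> Gz G (\<gamma> - e + b m' - \<delta> l)" using g[of l] by (simp add: c_def algebra_simps)
    qed
    thus ?thesis unfolding hvec_def by blast
  qed
  have "hgen (Kr n M (Suc m')) a zs"
    unfolding hgen_def using fgenI[OF submod_Kr sub span] hv by blast
  thus ?case by blast
qed

end

theorem mainTheorem14:
  fixes G :: "nat \<Rightarrow> 'r::ring_1 set"
  assumes "fg_standard_algebra G"
    and "\<exists>d0. \<forall>d\<ge>d0. rate_filtration G {I. fg_hom_right_ideal G I \<and> mdeg G I \<le> d}"
  shows "projective_coherent G"
proof -
  obtain S where S: "finite S" "S \<subseteq> G 1"
    "G 1 = {sum_list (map (\<lambda>(c, s). c * s) ps) | ps. set ps \<subseteq> G 0 \<times> S}"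
    using assms(1) unfolding fg_standard_algebra_def by blast
  have sa: "standard_algebra G" using assms(1) unfolding fg_standard_algebra_def by blast
  have sa1: "is_grading G" using sa unfolding standard_algebra_def by blast
  have sa2: "\<forall>a\<in>G 0. \<forall>x. a * x = x * a" using sa unfolding standard_algebra_def by blast
  have sa3: "\<forall>a\<in>G 0. a \<noteq> 0 \<longrightarrow> (\<exists>b\<in>G 0. a * b = 1)" using sa unfolding standard_algebra_def by blast
  have sa4: "\<forall>n. G (Suc n) = add_closure {a * b | a b. a \<in> G n \<and> b \<in> G 1}"
    using sa unfolding standard_algebra_def by blast
  interpret stdalg G S
  proof (unfold_locales)
    show "is_grading G" by (rule sa1)
    show "\<And>a x. a \<in> G 0 \<Longrightarrow> a * x = x * a" using sa2 by blast
    show "\<And>a. a \<in> G 0 \<Longrightarrow> a \<noteq> 0 \<Longrightarrow> \<exists>b\<in>G 0. a * b = 1" using sa3 by blast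
    show "\<And>n. G (Suc n) = add_closure {a * b | a b. a \<in> G n \<and> b \<in> G 1}" using sa4 by blast
    show "finite S" "S \<subseteq> G 1" by (rule S(1), rule S(2))
    show "G 1 = {sum_list (map (\<lambda>(c, s). c * s) ps) | ps. set ps \<subseteq> G 0 \<times> S}" by (rule S(3))
  qed
  show ?thesis
    unfolding projective_coherent_def
  proof (intro allI impI)
    fix n m :: nat and a b :: "nat \<Rightarrow> int" and e :: int and M :: "nat \<Rightarrow> nat \<Rightarrow> 'r"
    assume Mdeg: "\<forall>j<m. \<forall>i<n. M j i \<in> Gz G (a i - b j + e)"
    obtain ws where ws: "hgen (Kr n M m) a ws" using kernel_gen[OF assms(2) Mdeg, of m] by blast
    hence "set ws \<subseteq> Kr n M m" "Kr n M m = rspan ws" unfolding hgen_def fgen_def by auto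
    thus "let K = {v. (\<forall>i\<ge>n. v i = 0) \<and> (\<forall>j<m. (\<Sum>i<n. M j i * v i) = 0)} in
         \<exists>ws. set ws \<subseteq> K \<and> K = {(\<lambda>i. \<Sum>k<length ws. (ws ! k) i * r k) | r. True}"
      unfolding Let_def Kr_def rspan_def lc_def by blast
  qed
qed


end
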